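(* Let $N\ge3$, $N=2g+1$ or $N=2g+2$ with $g\ge1$, and let $\Phi:(\lambda_1,\dots,\lambda_g,z_1,\dots,z_g,v)\mapsto(f_1,\dots,f_N)$ be the rational map defined in the context. Equip the source with the Poisson brackets $\{\lambda_j,z_k\}=\delta_{jk}z_k$, $\{\lambda_j,\lambda_k\}=\{z_j,z_k\}=\{\lambda_j,v\}=\{z_j,v\}=0$, and the target with $\{f_m,f_n\}=-\delta_{m+1,n}+\delta_{m-1,n}$ (indices mod $N$; for $N$ even restricted to the subspace $f_1+f_3+\cdots+f_{N-1}=f_2+f_4+\cdots+f_N$). Then $\Phi$ is a Poisson map.
   Context: Definition of $\Phi$ (on the generic locus where $\lambda_j$ are pairwise distinct and nonzero and all denominators are nonzero): fix constants $\alpha_1,\dots,\alpha_N$, $\beta_m=\alpha_1+\cdots+\alpha_m$; put $b_0=1,\tilde a_0=0$ if $N=2g+1$ and $b_0=v,\tilde a_0=1$ if $N=2g+2$; $F_1(\lambda)=B(\lambda)=b_0\prod_{j=1}^g(\lambda-\lambda_j)$, $F_2(\lambda)=\tilde A(\lambda)=\bigl(\frac{\tilde a_0}{b_0}+\sum_{j=1}^g\frac{z_j}{B'(\lambda_j)(\lambda-\lambda_j)\lambda_j}\bigr)B(\lambda)$ with $B'(\lambda_j)=b_0\prod_{k\neq j}(\lambda_j-\lambda_k)$; recursively for $m=1,\dots,N-2$: $f_m=F_m(-\beta_m)/F_{m+1}(-\beta_m)$, $F_{m+2}(\lambda)=(F_m(\lambda)-f_mF_{m+1}(\lambda))/(\lambda+\beta_m)$;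 finally $f_{N-1}=F_{N-1}$ and $f_N=2v-(f_1+\cdots+f_{N-1})$. This map sends the spectral Darboux coordinates of the $N$-periodic dressing chain (zeros $\lambda_j$ of the $(1,2)$ entry $B$ of the transition matrix and $z_j=A(\lambda_j)$) and $v=\sum v_n$ to the Noumi–Yamada variables $f_n=v_n+v_{n+1}$. *)

theory Defs
  imports "HOL-Analysis.Analysis" "HOL-Computational_Algebra.Polynomial"
begin

text \<open>Source coordinates: lam j, z j for j in {1..g} (functions nat => real, only the
  values on {1..g} matter) and v. Parameters: N, g, alpha (alpha n for n in {1..N}).\<close>

definition beta :: "(nat \<Rightarrow> real) \<Rightarrow> nat \<Rightarrow> real" where
  "beta al m = (\<Sum>i=1..m. al i)"

definition bzero :: "nat \<Rightarrow> nat \<Rightarrow> real \<Rightarrow> real" where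
  "bzero N g v = (if N = 2*g+1 then 1 else v)"

definition azero :: "nat \<Rightarrow> nat \<Rightarrow> real" where
  "azero N g = (if N = 2*g+1 then 0 else 1)"

definition Bpoly :: "nat \<Rightarrow> nat \<Rightarrow> (nat \<Rightarrow> real) \<Rightarrow> real \<Rightarrow> real poly" where
  "Bpoly N g lam v = smult (bzero N g v) (\<Prod>j\<in>{1..g}. [:- lam j, 1:])"

text \<open>B'(lambda_j) = b0 * prod_{k ~= j} (lambda_j - lambda_k)\<close>
definition Bder :: "nat \<Rightarrow> nat \<Rightarrow> (nat \<Rightarrow> real) \<Rightarrow> real \<Rightarrow> nat \<Rightarrow> real" where
  "Bder N g lam v j = bzero N g v * (\<Prod>k\<in>{1..g}-{j}. (lam j - lam k))"

text \<open>A~(lambda) = (a0/b0 + sum_j z_j / (B'(lambda_j) (lambda - lambda_j) lambda_j)) B(lambda),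
  written as a polynomial, using the exact quotient B(lambda)/(lambda - lambda_j).\<close>
definition Apoly :: "nat \<Rightarrow> nat \<Rightarrow> (nat \<Rightarrow> real) \<Rightarrow> (nat \<Rightarrow> real) \<Rightarrow> real \<Rightarrow> real poly" where
  "Apoly N g lam z v =
     smult (azero N g / bzero N g v) (Bpoly N g lam v)
     + (\<Sum>j\<in>{1..g}. smult (z j / (Bder N g lam v j * lam j)) (Bpoly N g lam v div [:- lam j, 1:]))"

text \<open>F_1 = B, F_2 = A~, F_{m+2} = (F_m - f_m F_{m+1}) / (lambda + beta_m),
  f_m = F_m(-beta_m)/F_{m+1}(-beta_m).  (F_0 is an unused dummy.)\<close>
fun FF :: "nat \<Rightarrow> nat \<Rightarrow> (nat \<Rightarrow> real) \<Rightarrow> (nat \<Rightarrow> real) \<Rightarrow> (nat \<Rightarrow> real) \<Rightarrow> real \<Rightarrow> nat \<Rightarrow> real poly" where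
  "FF N g al lam z v 0 = 0"
| "FF N g al lam z v (Suc 0) = Bpoly N g lam v"
| "FF N g al lam z v (Suc (Suc 0)) = Apoly N g lam z v"
| "FF N g al lam z v (Suc (Suc (Suc m))) =
     (let Fm = FF N g al lam z v (Suc m);
          Fm1 = FF N g al lam z v (Suc (Suc m));
          c = poly Fm (- beta al (Suc m)) / poly Fm1 (- beta al (Suc m))
      in (Fm - smult c Fm1) div [:beta al (Suc m), 1:])"

definition fcoef :: "nat \<Rightarrow> nat \<Rightarrow> (nat \<Rightarrow> real) \<Rightarrow> (nat \<Rightarrow> real) \<Rightarrow> (nat \<Rightarrow> real) \<Rightarrow> real \<Rightarrow> nat \<Rightarrow> real" where
  "fcoef N g al lam z v m =
     poly (FF N g al lam z v m) (- beta al m) / poly (FF N g al lam z v (Suc m)) (- beta al m)"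

text \<open>The map Phi, component n (n in {1..N}):
  f_m for m <= N-2, f_{N-1} = F_{N-1} (a constant polynomial), f_N = 2v - (f_1+...+f_{N-1}).\<close>
definition Phi :: "nat \<Rightarrow> nat \<Rightarrow> (nat \<Rightarrow> real) \<Rightarrow> (nat \<Rightarrow> real) \<Rightarrow> (nat \<Rightarrow> real) \<Rightarrow> real \<Rightarrow> nat \<Rightarrow> real" where
  "Phi N g al lam z v n =
     (if n \<le> N - 2 then fcoef N g al lam z v n
      else if n = N - 1 then coeff (FF N g al lam z v (N - 1)) 0
      else 2 * v - ((\<Sum>i=1..N-2. fcoef N g al lam z v i) + coeff (FF N g al lam z v (N - 1)) 0))"

definition generic :: "nat \<Rightarrow> nat \<Rightarrow> (nat \<Rightarrow> real) \<Rightarrow> (nat \<Rightarrow> real) \<Rightarrow> (nat \<Rightarrow> real) \<Rightarrow> real \<Rightarrow> bool" where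
  "generic N g al lam z v \<longleftrightarrow>
     inj_on lam {1..g} \<and> (\<forall>j\<in>{1..g}. lam j \<noteq> 0) \<and> bzero N g v \<noteq> 0 \<and>
     (\<forall>m\<in>{1..N-2}. poly (FF N g al lam z v (Suc m)) (- beta al m) \<noteq> 0)"

definition dlam :: "((nat \<Rightarrow> real) \<Rightarrow> (nat \<Rightarrow> real) \<Rightarrow> real \<Rightarrow> real) \<Rightarrow> nat \<Rightarrow> (nat \<Rightarrow> real) \<Rightarrow> (nat \<Rightarrow> real) \<Rightarrow> real \<Rightarrow> real" where
  "dlam F j lam z v = deriv (\<lambda>t. F (lam(j := t)) z v) (lam j)"

definition dz :: "((nat \<Rightarrow> real) \<Rightarrow> (nat \<Rightarrow> real) \<Rightarrow> real \<Rightarrow> real) \<Rightarrow> nat \<Rightarrow> (nat \<Rightarrow> real) \<Rightarrow> (nat \<Rightarrow> real) \<Rightarrow> real \<Rightarrow> real" where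
  "dz F j lam z v = deriv (\<lambda>t. F lam (z(j := t)) v) (z j)"

text \<open>Source Poisson bracket induced by {lambda_j, z_k} = delta_jk z_k, all others 0
  (v is a Casimir):  {F,G} = sum_j z_j (dF/dlambda_j dG/dz_j - dF/dz_j dG/dlambda_j).\<close>
definition srcPB :: "nat \<Rightarrow> ((nat \<Rightarrow> real) \<Rightarrow> (nat \<Rightarrow> real) \<Rightarrow> real \<Rightarrow> real)
     \<Rightarrow> ((nat \<Rightarrow> real) \<Rightarrow> (nat \<Rightarrow> real) \<Rightarrow> real \<Rightarrow> real) \<Rightarrow> (nat \<Rightarrow> real) \<Rightarrow> (nat \<Rightarrow> real) \<Rightarrow> real \<Rightarrow> real" where
  "srcPB g F G lam z v =
     (\<Sum>j\<in>{1..g}. z j * (dlam F j lam z v * dz G j lam z v - dz F j lam z v * dlam G j lam z v))"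

definition cnext :: "nat \<Rightarrow> nat \<Rightarrow> nat" where
  "cnext N m = (if m = N then 1 else m + 1)"

definition tgtPB :: "nat \<Rightarrow> nat \<Rightarrow> nat \<Rightarrow> real" where
  "tgtPB N m n = (if n = cnext N m then -1 else 0) + (if m = cnext N n then 1 else 0)"

end

theory Submission
  imports Defs
begin

section \<open>Division by a monic linear polynomial\<close>

lemma div_lin_synth: "p div [:-c, 1:] = synthetic_div p (c::real)"
proof -
  have L: "[:-c, 1:] \<noteq> (0::real poly)" by simp
  have "p = [:poly p c:] + synthetic_div p c * [:-c, 1:]"
    using synthetic_div_correct'[of c p] by (simp add: algebra_simps)
  hence "p div [:-c, 1:] = ([:poly p c:] + synthetic_div p c * [:-c, 1:]) div [:-c, 1:]" by simp
  also have "\<dots> = synthetic_div p c + [:poly p c:] div [:-c, 1:]"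
    by (simp only: div_mult_self1[OF L])
  also have "[:poly p c:] div [:-c, 1:] = 0"
    by (rule div_poly_less) simp
  finally show ?thesis by simp
qed

lemma poly_div_lin: "poly (p div [:-c, 1:]) x * (x - c) = poly p x - poly p (c::real)"
proof -
  have "poly ([:-c, 1:] * synthetic_div p c + [:poly p c:]) x = poly p x"
    using synthetic_div_correct'[of c p] by simp
  thus ?thesis by (simp add: div_lin_synth algebra_simps)
qed

lemma poly_div_lin': "x \<noteq> c \<Longrightarrow> poly (p div [:-c, 1:]) x = (poly p x - poly p (c::real)) / (x - c)"
  using poly_div_lin[of p c x] by (simp add: field_simps)

lemma coeff_synth_rec: "coeff (synthetic_div p c) i = coeff p (Suc i) + c * coeff (synthetic_div p (c::real)) (Suc i)"
proof -
  have "coeff (p + smult c (synthetic_div p c)) (Suc i) = coeff (pCons (poly p c) (synthetic_div p c)) (Suc i)"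
    using synthetic_div_correct[of p c] by simp
  thus ?thesis by simp
qed

lemma degree_div_lin: "degree (p div [:-c, 1:]) = degree p - (1::nat)" for c :: real
  by (simp add: div_lin_synth degree_synthetic_div)

lemma coeff_div_lin_top: "degree p \<le> Suc n \<Longrightarrow> coeff (p div [:-c, 1:]) n = coeff p (Suc n)" for c :: real
proof -
  assume d: "degree p \<le> Suc n"
  have "coeff (synthetic_div p c) (Suc n) = 0"
    using d by (intro coeff_eq_0) (simp add: degree_synthetic_div)
  thus ?thesis using coeff_synth_rec[of p c n] by (simp add: div_lin_synth)
qed

lemma div_lin_deg: "degree S \<le> Suc n \<Longrightarrow> degree (S div [:-c, 1:]) \<le> n \<and> coeff (S div [:-c, 1:]) n = coeff S (Suc n)"
  for c :: real using degree_div_lin[of S c] coeff_div_lin_top[of S n c] by simp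

section \<open>Coefficientwise derivatives of polynomial-valued functions\<close>

definition PD :: "(real \<Rightarrow> real poly) \<Rightarrow> real \<Rightarrow> real poly \<Rightarrow> bool" where
  "PD F x p \<longleftrightarrow> (\<exists>n. \<forall>t. degree (F t) \<le> n) \<and>
     (\<forall>i. ((\<lambda>t. coeff (F t) i) has_real_derivative coeff p i) (at x))"

lemma PD_degree:
  assumes "PD F x p" and "\<forall>t. degree (F t) \<le> n"
  shows "degree p \<le> n"
proof -
  have "coeff p i = 0" if "i > n" for i
  proof -
    have "((\<lambda>t. coeff (F t) i) has_real_derivative coeff p i) (at x)" using assms(1) PD_def by blast
    moreover have "(\<lambda>t. coeff (F t) i) = (\<lambda>t. 0)"
      using assms(2) that by (metis coeff_eq_0 le_less_trans)
    ultimately have "((\<lambda>t. 0) has_real_derivative coeff p i) (at x)" by simp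
    thus ?thesis using DERIV_const DERIV_unique by blast
  qed
  thus ?thesis by (meson degree_le not_le)
qed

lemma PD_unique: "PD F x p \<Longrightarrow> PD F x q \<Longrightarrow> p = q"
  unfolding PD_def by (metis DERIV_unique poly_eqI)

lemma PD_const: "PD (\<lambda>t. p) x 0"
  unfolding PD_def by auto

lemma PD_add: "PD F x p \<Longrightarrow> PD G x q \<Longrightarrow> PD (\<lambda>t. F t + G t) x (p + q)"
proof -
  assume F: "PD F x p" and G: "PD G x q"
  obtain n1 where n1: "\<forall>t. degree (F t) \<le> n1" using F PD_def by blast
  obtain n2 where n2: "\<forall>t. degree (G t) \<le> n2" using G PD_def by blast
  have "\<forall>t. degree (F t + G t) \<le> max n1 n2"
    using n1 n2 by (meson degree_add_le max.coboundedI1 max.coboundedI2 order.trans)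
  moreover have "((\<lambda>t. coeff (F t + G t) i) has_real_derivative coeff (p + q) i) (at x)" for i
    using F G unfolding PD_def by (simp add: Deriv.field_differentiable_add)
  ultimately show ?thesis unfolding PD_def by blast
qed

lemma PD_minus: "PD F x p \<Longrightarrow> PD (\<lambda>t. - F t) x (- p)"
  unfolding PD_def by (simp add: Deriv.field_differentiable_minus)

lemma PD_diff: "PD F x p \<Longrightarrow> PD G x q \<Longrightarrow> PD (\<lambda>t. F t - G t) x (p - q)"
  using PD_add[of F x p "\<lambda>t. - G t" "- q"] PD_minus[of G x q] by simp

lemma PD_smult:
  assumes a: "(a has_real_derivative a') (at x)" and F: "PD F x p"
  shows "PD (\<lambda>t. smult (a t) (F t)) x (smult a' (F x) + smult (a x) p)"
  using F unfolding PD_def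
  by (auto intro!: derivative_eq_intros a order.trans[OF degree_smult_le])

lemma PD_mult:
  assumes F: "PD F x p" and G: "PD G x q"
  shows "PD (\<lambda>t. F t * G t) x (p * G x + F x * q)"
proof -
  obtain n1 where n1: "\<forall>t. degree (F t) \<le> n1" using F PD_def by blast
  obtain n2 where n2: "\<forall>t. degree (G t) \<le> n2" using G PD_def by blast
  have "\<forall>t. degree (F t * G t) \<le> n1 + n2"
    using n1 n2 by (meson add_mono degree_mult_le order.trans)
  moreover have "((\<lambda>t. coeff (F t * G t) i) has_real_derivative coeff (p * G x + F x * q) i) (at x)" for i
  proof -
    have dF: "\<And>k. ((\<lambda>t. coeff (F t) k) has_real_derivative coeff p k) (at x)" using F PD_def by blast
    have dG: "\<And>k. ((\<lambda>t. coeff (G t) k) has_real_derivative coeff q k) (at x)" using G PD_def by blast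
    have "((\<lambda>t. \<Sum>k\<le>i. coeff (F t) k * coeff (G t) (i - k)) has_real_derivative
            (\<Sum>k\<le>i. coeff p k * coeff (G x) (i - k) + coeff (F x) k * coeff q (i - k))) (at x)"
      by (auto intro!: derivative_eq_intros dF dG sum.cong simp: mult.commute)
    thus ?thesis by (simp only: coeff_add coeff_mult sum.distrib)
  qed
  ultimately show ?thesis unfolding PD_def by blast
qed

lemma PD_sum:
  assumes "finite S" "\<And>k. k \<in> S \<Longrightarrow> PD (F k) x (p k)"
  shows "PD (\<lambda>t. \<Sum>k\<in>S. F k t) x (\<Sum>k\<in>S. p k)"
  using assms
proof (induction S rule: finite_induct)
  case empty
  then show ?case using PD_const[of 0 x] by simp
next
  case (insert a S)
  then show ?case using PD_add[of "F a" x "p a" "\<lambda>t. \<Sum>k\<in>S. F k t" "\<Sum>k\<in>S. p k"] by simp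
qed

lemma PD_prod:
  assumes "finite S" "\<And>k. k \<in> S \<Longrightarrow> PD (F k) x (p k)"
  shows "\<exists>q. PD (\<lambda>t. \<Prod>k\<in>S. F k t) x q"
  using assms
proof (induction S rule: finite_induct)
  case empty
  then show ?case using PD_const[of 1 x] by auto
next
  case (insert a S)
  then obtain q where "PD (\<lambda>t. \<Prod>k\<in>S. F k t) x q" by auto
  then show ?case using PD_mult[of "F a" x "p a" "\<lambda>t. \<Prod>k\<in>S. F k t" q] insert by auto
qed

lemma PD_div_lin:
  assumes F: "PD F x p"
  shows "PD (\<lambda>t. F t div [:-c, 1:]) x (p div [:-c, 1:])"
proof -
  obtain n where n: "\<forall>t. degree (F t) \<le> n" using F PD_def by blast
  have dF: "\<And>k. ((\<lambda>t. coeff (F t) k) has_real_derivative coeff p k) (at x)" using F PD_def by blast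
  have dp: "degree p \<le> n" using PD_degree F n by blast
  have z0: "coeff (synthetic_div q c) i = 0" if "degree q \<le> n" "n \<le> i" for q :: "real poly" and i
  proof (cases "degree q = 0")
    case True
    then have "synthetic_div q c = 0" by (simp add: synthetic_div_eq_0_iff)
    thus ?thesis by simp
  next
    case False
    thus ?thesis using that by (intro coeff_eq_0) (simp add: degree_synthetic_div)
  qed
  have z1: "coeff (synthetic_div (F t) c) i = 0" if "n \<le> i" for t i
    using z0 n that by blast
  have z2: "coeff (synthetic_div p c) i = 0" if "n \<le> i" for i
    using z0 dp that by blast
  have main: "((\<lambda>t. coeff (synthetic_div (F t) c) i) has_real_derivative coeff (synthetic_div p c) i) (at x)" for i
  proof (cases "n \<le> i")
    case True
    then show ?thesis using z1 z2 by simp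
  next
    case False
    hence "i \<le> n" by simp
    thus ?thesis
    proof (induction i rule: inc_induct)
      case base
      then show ?case using z1 z2 by simp
    next
      case (step m)
      have "((\<lambda>t. coeff (F t) (Suc m) + c * coeff (synthetic_div (F t) c) (Suc m)) has_real_derivative
              coeff p (Suc m) + c * coeff (synthetic_div p c) (Suc m)) (at x)"
        by (auto intro!: derivative_eq_intros dF step.IH)
      then show ?case by (subst (1 2) coeff_synth_rec) simp
    qed
  qed
  show ?thesis unfolding PD_def div_lin_synth
    using main n by (auto simp: degree_synthetic_div intro: le_trans[OF diff_le_self])
qed

lemma PD_poly:
  assumes F: "PD F x p"
  shows "((\<lambda>t. poly (F t) y) has_real_derivative poly p y) (at x)"
proof -
  obtain n where n: "\<forall>t. degree (F t) \<le> n" using F PD_def by blast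
  have dF: "\<And>k. ((\<lambda>t. coeff (F t) k) has_real_derivative coeff p k) (at x)" using F PD_def by blast
  have dp: "degree p \<le> n" using PD_degree F n by blast
  have e: "poly q y = (\<Sum>i\<le>n. coeff q i * y ^ i)" if "degree q \<le> n" for q :: "real poly"
  proof -
    have "poly q y = poly (\<Sum>i\<le>n. monom (coeff q i) i) y" using poly_as_sum_of_monoms'[OF that] by simp
    also have "\<dots> = (\<Sum>i\<le>n. coeff q i * y ^ i)" by (simp add: poly_sum poly_monom)
    finally show ?thesis .
  qed
  have "((\<lambda>t. \<Sum>i\<le>n. coeff (F t) i * y ^ i) has_real_derivative (\<Sum>i\<le>n. coeff p i * y ^ i)) (at x)"
    by (auto intro!: derivative_eq_intros dF)
  thus ?thesis using e[OF dp] e n by simp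
qed


section \<open>Jet algebra\<close>

definition ev :: "(nat \<Rightarrow> bool \<Rightarrow> real poly) \<Rightarrow> real \<Rightarrow> nat \<Rightarrow> bool \<Rightarrow> real" where
  "ev dP x = (\<lambda>j b. poly (dP j b) x)"

definition qf :: "real poly \<Rightarrow> real poly \<Rightarrow> real \<Rightarrow> real" where
  "qf P Q c = poly P c / poly Q c"

definition qd :: "real poly \<Rightarrow> (nat \<Rightarrow> bool \<Rightarrow> real poly) \<Rightarrow> real poly \<Rightarrow> (nat \<Rightarrow> bool \<Rightarrow> real poly) \<Rightarrow> real \<Rightarrow> nat \<Rightarrow> bool \<Rightarrow> real" where
  "qd P dP Q dQ c = (\<lambda>j b. (poly (dP j b) c * poly Q c - poly P c * poly (dQ j b) c) / (poly Q c)^2)"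

definition nR :: "real poly \<Rightarrow> real poly \<Rightarrow> real \<Rightarrow> real poly" where
  "nR P Q c = (P - smult (qf P Q c) Q) div [:-c, 1:]"

definition ndR :: "real poly \<Rightarrow> (nat \<Rightarrow> bool \<Rightarrow> real poly) \<Rightarrow> real poly \<Rightarrow> (nat \<Rightarrow> bool \<Rightarrow> real poly) \<Rightarrow> real \<Rightarrow> nat \<Rightarrow> bool \<Rightarrow> real poly" where
  "ndR P dP Q dQ c = (\<lambda>j b. (dP j b - smult (qd P dP Q dQ c j b) Q - smult (qf P Q c) (dQ j b)) div [:-c, 1:])"

lemma qd_lin: "poly Q c \<noteq> 0 \<Longrightarrow> qd P dP Q dQ c =
   (\<lambda>j b. (1 / poly Q c) * ev dP c j b + (- poly P c / (poly Q c)^2) * ev dQ c j b)"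
  by (auto simp: fun_eq_iff qd_def ev_def field_simps power2_eq_square)

lemma E1: "poly Q c \<noteq> 0 \<Longrightarrow> x \<noteq> c \<Longrightarrow> poly (nR P Q c) x = (poly P x - qf P Q c * poly Q x) / (x - c)"
  unfolding nR_def by (simp add: poly_div_lin' qf_def)

lemma E2: "poly Q c \<noteq> 0 \<Longrightarrow> x \<noteq> c \<Longrightarrow> ev (ndR P dP Q dQ c) x =
   (\<lambda>j b. (1 / (x - c)) * ev dP x j b + (- poly Q x / (x - c)) * qd P dP Q dQ c j b
          + (- qf P Q c / (x - c)) * ev dQ x j b)"
proof -
  assume Qc: "poly Q c \<noteq> 0" and xc: "x \<noteq> c"
  have z: "poly (dP j b - smult (qd P dP Q dQ c j b) Q - smult (qf P Q c) (dQ j b)) c = 0" for j b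
    using Qc by (simp add: qd_def qf_def field_simps power2_eq_square)
  have h: "poly (ndR P dP Q dQ c j b) x = (poly (dP j b) x - qd P dP Q dQ c j b * poly Q x - qf P Q c * poly (dQ j b) x) / (x - c)" for j b
  proof -
    have "poly (ndR P dP Q dQ c j b) x = (poly (dP j b - smult (qd P dP Q dQ c j b) Q - smult (qf P Q c) (dQ j b)) x - 0) / (x - c)"
      unfolding ndR_def using poly_div_lin'[OF xc] z by metis
    thus ?thesis by (simp add: algebra_simps)
  qed
  have xc': "x - c \<noteq> 0" using xc by simp
  show ?thesis unfolding ev_def
  proof (intro ext)
    fix j b
    show "poly (ndR P dP Q dQ c j b) x = 1 / (x - c) * poly (dP j b) x + - poly Q x / (x - c) * qd P dP Q dQ c j b +
      - qf P Q c / (x - c) * poly (dQ j b) x"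
      unfolding h by (simp add: divide_inverse algebra_simps)
  qed
qed

lemma ext_pt:
  fixes F G :: "real \<Rightarrow> real"
  assumes "isCont F c" "isCont G c" "\<And>x. x \<noteq> c \<Longrightarrow> F x = G x"
  shows "F c = G c"
proof -
  have F: "(F \<longlongrightarrow> F c) (at c)" and G: "(G \<longlongrightarrow> G c) (at c)"
    using assms(1,2) isCont_def by auto
  have e: "\<forall>\<^sub>F x in at c. F x = G x"
    using assms(3) by (auto simp: eventually_at intro!: exI[of _ 1])
  have "(G \<longlongrightarrow> F c) (at c)" using F e by (rule Lim_transform_eventually)
  thus ?thesis using G LIM_unique by blast
qed

lemma ext_all:
  fixes F G :: "real \<Rightarrow> real"
  assumes "isCont F c" "isCont G c" "\<And>x. x \<noteq> c \<Longrightarrow> F x = G x"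
  shows "F y = G y"
  using ext_pt[OF assms] assms(3) by (cases "y = c") auto

context
  fixes g :: nat and z :: "nat \<Rightarrow> real"
begin

definition br :: "(nat \<Rightarrow> bool \<Rightarrow> real) \<Rightarrow> (nat \<Rightarrow> bool \<Rightarrow> real) \<Rightarrow> real" where
  "br a b = (\<Sum>j\<in>{1..g}. z j * (a j True * b j False - a j False * b j True))"

lemma br_anti: "br a b = - br b a"
  unfolding br_def by (simp add: sum_negf[symmetric] algebra_simps)

lemma br_self: "br a a = 0"
  using br_anti[of a a] by simp

lemma br_lin1: "br (\<lambda>j b. x * a j b + y * c j b) d = x * br a d + y * br c d"
  unfolding br_def by (simp add: sum_distrib_left sum.distrib[symmetric] algebra_simps)

lemma br_lin2: "br d (\<lambda>j b. x * a j b + y * c j b) = x * br d a + y * br d c"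
  unfolding br_def by (simp add: sum_distrib_left sum.distrib[symmetric] algebra_simps)

lemma br_lin1': "br (\<lambda>j b. x * a j b + y * c j b + w * e j b) d = x * br a d + y * br c d + w * br e d"
  unfolding br_def by (simp add: sum_distrib_left sum.distrib[symmetric] algebra_simps)

lemma br_lin2': "br d (\<lambda>j b. x * a j b + y * c j b + w * e j b) = x * br d a + y * br d c + w * br d e"
  unfolding br_def by (simp add: sum_distrib_left sum.distrib[symmetric] algebra_simps)

lemma br_lin1s: "br (\<lambda>j b. x * a j b) d = x * br a d"
  unfolding br_def by (simp add: sum_distrib_left algebra_simps)

lemma br_lin2s: "br d (\<lambda>j b. x * a j b) = x * br d a"
  unfolding br_def by (simp add: sum_distrib_left algebra_simps)

lemma br_sum2: "finite S \<Longrightarrow> br d (\<lambda>j b. \<Sum>i\<in>S. a i j b) = (\<Sum>i\<in>S. br d (a i))"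
  unfolding br_def by (simp add: sum_distrib_left sum_subtractf[symmetric] sum_distrib_right algebra_simps sum.swap[of _ S])

lemma isCont_br2: "isCont (\<lambda>y. br a (ev dP y)) c"
  unfolding br_def ev_def by (intro continuous_intros)

lemma isCont_br1: "isCont (\<lambda>y. br (ev dP y) a) c"
  unfolding br_def ev_def by (intro continuous_intros)

definition Inv :: "real poly \<Rightarrow> (nat \<Rightarrow> bool \<Rightarrow> real poly) \<Rightarrow> real poly \<Rightarrow> (nat \<Rightarrow> bool \<Rightarrow> real poly) \<Rightarrow> bool" where
  "Inv P dP Q dQ \<longleftrightarrow> (\<forall>x y. br (ev dP x) (ev dP y) = 0) \<and> (\<forall>x y. br (ev dQ x) (ev dQ y) = 0) \<and>
     (\<forall>x y. (x - y) * br (ev dP x) (ev dQ y) = - (poly P x * poly Q y - poly P y * poly Q x))"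


lemma step:
  assumes Qc: "poly Q c \<noteq> 0" and inv: "Inv P dP Q dQ"
  defines "f \<equiv> qf P Q c" and "df \<equiv> qd P dP Q dQ c" and "R \<equiv> nR P Q c" and "dR \<equiv> ndR P dP Q dQ c"
  shows "(\<forall>y. br df (ev dQ y) = - poly R y) \<and> (\<forall>y. br df (ev dP y) = - f * poly R y) \<and>
         (\<forall>y. br df (ev dR y) = 0) \<and> Inv Q dQ R dR"
proof -
  have I1: "\<And>x y. br (ev dP x) (ev dP y) = 0" and I2: "\<And>x y. br (ev dQ x) (ev dQ y) = 0"
    and I3: "\<And>x y. (x - y) * br (ev dP x) (ev dQ y) = - (poly P x * poly Q y - poly P y * poly Q x)"
    using inv unfolding Inv_def by auto
  have W: "br (ev dP x) (ev dQ y) = - (poly P x * poly Q y - poly P y * poly Q x) / (x - y)" if "x \<noteq> y" for x y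
    using I3[of x y] that by (simp add: eq_divide_eq mult.commute)
  have Wsym: "br (ev dP x) (ev dQ y) = br (ev dP y) (ev dQ x)" for x y
  proof (cases "x = y")
    case False
    have "(x - y) * br (ev dP x) (ev dQ y) = (x - y) * br (ev dP y) (ev dQ x)"
      using I3[of x y] I3[of y x] by (simp add: algebra_simps)
    thus ?thesis using False by simp
  qed simp
  have dfl: "df = (\<lambda>j b. (1 / poly Q c) * ev dP c j b + (- poly P c / (poly Q c)^2) * ev dQ c j b)"
    unfolding df_def using qd_lin[OF Qc] .
  have ER: "poly R y = (poly P y - f * poly Q y) / (y - c)" if "y \<noteq> c" for y
    unfolding R_def f_def using E1[OF Qc that] .
  have EdR: "ev dR y = (\<lambda>j b. (1 / (y - c)) * ev dP y j b + (- poly Q y / (y - c)) * df j b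
          + (- f / (y - c)) * ev dQ y j b)" if "y \<noteq> c" for y
    unfolding dR_def df_def f_def using E2[OF Qc that] .
  have S1: "br df (ev dQ y) = - poly R y" for y
  proof (rule ext_all[where F="\<lambda>y. br df (ev dQ y)" and G="\<lambda>y. - poly R y" and c=c])
    show "isCont (\<lambda>y. br df (ev dQ y)) c" by (rule isCont_br2)
    show "isCont (\<lambda>y. - poly R y) c" by (intro continuous_intros)
    fix y assume yc: "y \<noteq> c"
    have "br df (ev dQ y) = (1 / poly Q c) * br (ev dP c) (ev dQ y)"
      unfolding dfl br_lin1 I2 by simp
    also have "\<dots> = - poly R y"
      using yc Qc unfolding W[OF yc[symmetric]] ER[OF yc] f_def qf_def by (simp add: field_simps)
    finally show "br df (ev dQ y) = - poly R y" .
  qed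
  have S0: "br df (ev dP y) = - f * poly R y" for y
  proof (rule ext_all[where F="\<lambda>y. br df (ev dP y)" and G="\<lambda>y. - f * poly R y" and c=c])
    show "isCont (\<lambda>y. br df (ev dP y)) c" by (rule isCont_br2)
    show "isCont (\<lambda>y. - f * poly R y) c" by (intro continuous_intros)
    fix y assume yc: "y \<noteq> c"
    have "br df (ev dP y) = (- poly P c / (poly Q c)^2) * br (ev dQ c) (ev dP y)"
      unfolding dfl br_lin1 I1 by simp
    also have "\<dots> = (poly P c / (poly Q c)^2) * br (ev dP y) (ev dQ c)"
      using br_anti[of "ev dQ c" "ev dP y"] by simp
    also have "\<dots> = - f * poly R y"
      using yc Qc unfolding W[OF yc] ER[OF yc] f_def qf_def by (simp add: field_simps power2_eq_square)
    finally show "br df (ev dP y) = - f * poly R y" .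
  qed
  have dfdf: "br df df = 0" by (rule br_self)
  have S2: "br df (ev dR y) = 0" for y
  proof (rule ext_all[where F="\<lambda>y. br df (ev dR y)" and G="\<lambda>y. 0" and c=c])
    show "isCont (\<lambda>y. br df (ev dR y)) c" by (rule isCont_br2)
    show "isCont (\<lambda>y. 0::real) c" by (intro continuous_intros)
    fix y assume yc: "y \<noteq> c"
    show "br df (ev dR y) = 0"
      unfolding EdR[OF yc] br_lin2' S0 S1 dfdf by (simp add: divide_inverse algebra_simps)
  qed
  have b1: "br (ev dP x) df = f * poly R x" for x
    using br_anti[of "ev dP x" df] S0[of x] by simp
  have b2: "br (ev dQ x) df = poly R x" for x
    using br_anti[of "ev dQ x" df] S1[of x] by simp
  have b3: "br (ev dQ x) (ev dP y) = - br (ev dP x) (ev dQ y)" for x y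
    using br_anti[of "ev dQ x" "ev dP y"] Wsym[of y x] by simp
  have RR0: "br (ev dR x) (ev dR y) = 0" if xc: "x \<noteq> c" for x y
  proof (rule ext_all[where F="\<lambda>y. br (ev dR x) (ev dR y)" and G="\<lambda>y. 0" and c=c])
    show "isCont (\<lambda>y. br (ev dR x) (ev dR y)) c" by (rule isCont_br2)
    show "isCont (\<lambda>y. 0::real) c" by (intro continuous_intros)
    fix y assume yc: "y \<noteq> c"
    show "br (ev dR x) (ev dR y) = 0"
      unfolding EdR[OF yc] EdR[OF xc] br_lin2' br_lin1' I1 I2 b1 b2 b3 S0 S1 dfdf
      by (simp add: divide_inverse algebra_simps)
  qed
  have RR: "br (ev dR x) (ev dR y) = 0" for x y
  proof (rule ext_all[where F="\<lambda>x. br (ev dR x) (ev dR y)" and G="\<lambda>x. 0" and c=c])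
    show "isCont (\<lambda>x. br (ev dR x) (ev dR y)) c" by (rule isCont_br1)
    show "isCont (\<lambda>y. 0::real) c" by (intro continuous_intros)
    fix x assume xc: "x \<noteq> c"
    show "br (ev dR x) (ev dR y) = 0" using RR0[OF xc] .
  qed
  have QR0: "(x - y) * br (ev dQ x) (ev dR y) = - (poly Q x * poly R y - poly Q y * poly R x)"
    if xc: "x \<noteq> c" for x y
  proof (rule ext_all[where F="\<lambda>y. (x - y) * br (ev dQ x) (ev dR y)"
        and G="\<lambda>y. - (poly Q x * poly R y - poly Q y * poly R x)" and c=c])
    show "isCont (\<lambda>y. (x - y) * br (ev dQ x) (ev dR y)) c" by (intro continuous_intros isCont_br2)
    show "isCont (\<lambda>y. - (poly Q x * poly R y - poly Q y * poly R x)) c" by (intro continuous_intros)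
    fix y assume yc: "y \<noteq> c"
    have e: "br (ev dQ x) (ev dR y) = (1 / (y - c)) * (- br (ev dP x) (ev dQ y)) + (- poly Q y / (y - c)) * poly R x"
      unfolding EdR[OF yc] br_lin2' I2 b2 b3 by simp
    show "(x - y) * br (ev dQ x) (ev dR y) = - (poly Q x * poly R y - poly Q y * poly R x)"
    proof (cases "x = y")
      case True
      then show ?thesis by simp
    next
      case False
      have yc': "y - c \<noteq> 0" using yc by auto
      have h1: "(x - y) * br (ev dP x) (ev dQ y) = - (poly P x * poly Q y - poly P y * poly Q x)" by (rule I3)
      have h2: "poly R x * (x - c) = poly P x - f * poly Q x" using ER[OF xc] xc by (simp add: field_simps)
      have h3: "poly R y * (y - c) = poly P y - f * poly Q y" using ER[OF yc] yc by (simp add: field_simps)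
      have "(x - y) * br (ev dQ x) (ev dR y) = ((x - y) * (- br (ev dP x) (ev dQ y)) - (x - y) * poly Q y * poly R x) / (y - c)"
        unfolding e by (simp add: divide_inverse algebra_simps)
      also have "(x - y) * (- br (ev dP x) (ev dQ y)) - (x - y) * poly Q y * poly R x
          = - (poly Q x * poly R y - poly Q y * poly R x) * (y - c)"
        using h1 h2 h3 by algebra
      finally show ?thesis using yc' by simp
    qed
  qed
  have QR: "(x - y) * br (ev dQ x) (ev dR y) = - (poly Q x * poly R y - poly Q y * poly R x)" for x y
  proof (rule ext_all[where F="\<lambda>x. (x - y) * br (ev dQ x) (ev dR y)"
        and G="\<lambda>x. - (poly Q x * poly R y - poly Q y * poly R x)" and c=c])
    show "isCont (\<lambda>x. (x - y) * br (ev dQ x) (ev dR y)) c" by (intro continuous_intros isCont_br1)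
    show "isCont (\<lambda>x. - (poly Q x * poly R y - poly Q y * poly R x)) c" by (intro continuous_intros)
    fix x assume xc: "x \<noteq> c"
    show "(x - y) * br (ev dQ x) (ev dR y) = - (poly Q x * poly R y - poly Q y * poly R x)" using QR0[OF xc] .
  qed
  show ?thesis unfolding Inv_def using S0 S1 S2 I2 RR QR by blast
qed


lemma commute:
  assumes Qc: "poly Q c \<noteq> 0" and hP: "\<And>y. br a (ev dP y) = 0" and hQ: "\<And>y. br a (ev dQ y) = 0"
  shows "br a (qd P dP Q dQ c) = 0 \<and> (\<forall>y. br a (ev (ndR P dP Q dQ c) y) = 0)"
proof -
  have d: "br a (qd P dP Q dQ c) = 0"
    unfolding qd_lin[OF Qc] br_lin2 hP hQ by simp
  have "br a (ev (ndR P dP Q dQ c) y) = 0" for y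
  proof (rule ext_all[where F="\<lambda>y. br a (ev (ndR P dP Q dQ c) y)" and G="\<lambda>y. 0" and c=c])
    show "isCont (\<lambda>y. br a (ev (ndR P dP Q dQ c) y)) c" by (rule isCont_br2)
    show "isCont (\<lambda>y. 0::real) c" by (intro continuous_intros)
    fix y assume yc: "y \<noteq> c"
    show "br a (ev (ndR P dP Q dQ c) y) = 0"
      unfolding E2[OF Qc yc] br_lin2' hP hQ d by simp
  qed
  thus ?thesis using d by blast
qed

lemma consec:
  assumes Qc: "poly Q c \<noteq> 0" and Rc: "poly (nR P Q c) c' \<noteq> 0" and inv: "Inv P dP Q dQ"
  shows "br (qd P dP Q dQ c) (qd Q dQ (nR P Q c) (ndR P dP Q dQ c) c') = -1 \<and>
    (\<forall>y. br (qd P dP Q dQ c) (ev (ndR Q dQ (nR P Q c) (ndR P dP Q dQ c) c') y) = 0)"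
proof -
  define R where "R = nR P Q c"
  define dR where "dR = ndR P dP Q dQ c"
  define df where "df = qd P dP Q dQ c"
  define df' where "df' = qd Q dQ R dR c'"
  have st: "(\<forall>y. br df (ev dQ y) = - poly R y) \<and> (\<forall>y. br df (ev dR y) = 0)"
    using step[OF Qc inv] unfolding R_def dR_def df_def by blast
  hence S1: "\<And>y. br df (ev dQ y) = - poly R y" and S2: "\<And>y. br df (ev dR y) = 0" by auto
  have Rc': "poly R c' \<noteq> 0" using Rc R_def by simp
  have m1: "br df df' = -1"
    unfolding df'_def qd_lin[OF Rc'] br_lin2 S1 S2 using Rc' by simp
  have "br df (ev (ndR Q dQ R dR c') y) = 0" for y
  proof (rule ext_all[where F="\<lambda>y. br df (ev (ndR Q dQ R dR c') y)" and G="\<lambda>y. 0" and c=c'])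
    show "isCont (\<lambda>y. br df (ev (ndR Q dQ R dR c') y)) c'" by (rule isCont_br2)
    show "isCont (\<lambda>y. 0::real) c'" by (intro continuous_intros)
    fix y assume yc: "y \<noteq> c'"
    show "br df (ev (ndR Q dQ R dR c') y) = 0"
      unfolding E2[OF Rc' yc] br_lin2' S1 S2 m1[unfolded df'_def] by (simp add: divide_inverse algebra_simps)
  qed
  thus ?thesis using m1 unfolding R_def dR_def df_def df'_def by blast
qed

end


lemma PD_lin: "PD (\<lambda>t. [:-t, 1:]) x [:-1:]"
proof -
  have "((\<lambda>t. coeff [:-t, 1:] i) has_real_derivative coeff [:-1:] i) (at x)" for i
  proof (cases i)
    case 0
    then show ?thesis by (auto intro!: derivative_eq_intros)
  next
    case (Suc n)
    then show ?thesis by (cases n) auto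
  qed
  moreover have "\<forall>t. degree [:-t, 1::real:] \<le> 1" by simp
  ultimately show ?thesis unfolding PD_def by blast
qed

lemma PD_smult_const: "PD F x p \<Longrightarrow> PD (\<lambda>t. smult a (F t)) x (smult a p)"
  using PD_smult[of "\<lambda>t. a" 0 x F p] by simp

lemma PD_mult_const: "PD F x p \<Longrightarrow> PD (\<lambda>t. F t * C) x (p * C)"
  using PD_mult[of F x p "\<lambda>t. C" 0] PD_const[of C x] by simp

lemma PD_sum_ex:
  assumes "finite S" "\<And>k. k \<in> S \<Longrightarrow> \<exists>p. PD (F k) x p"
  shows "\<exists>p. PD (\<lambda>t. \<Sum>k\<in>S. F k t) x p"
proof -
  obtain p where "\<And>k. k \<in> S \<Longrightarrow> PD (F k) x (p k)" using assms(2) by metis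
  thus ?thesis using PD_sum[OF assms(1)] by blast
qed

lemma monic_prod:
  fixes a :: "nat \<Rightarrow> real"
  assumes "finite S"
  shows "degree (\<Prod>i\<in>S. [:-a i, 1:]) = card S \<and> coeff (\<Prod>i\<in>S. [:-a i, 1:]) (card S) = 1"
  using assms
proof (induction S rule: finite_induct)
  case empty
  then show ?case by simp
next
  case (insert x S)
  have nz: "(\<Prod>i\<in>S. [:-a i, 1:]) \<noteq> 0"
    using insert.IH by (metis one_neq_zero coeff_0)
  have d: "degree ([:-a x, 1:] * (\<Prod>i\<in>S. [:-a i, 1:])) = Suc (card S)"
    using nz insert.IH by (subst degree_mult_eq) auto
  have "lead_coeff ([:-a x, 1:] * (\<Prod>i\<in>S. [:-a i, 1:])) = lead_coeff [:-a x, 1:] * lead_coeff (\<Prod>i\<in>S. [:-a i, 1:])"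
    by (rule lead_coeff_mult)
  hence "lead_coeff ([:-a x, 1:] * (\<Prod>i\<in>S. [:-a i, 1:])) = 1"
    using insert.IH by simp
  then show ?case using d insert.hyps by simp
qed

lemma roots_prod:
  fixes p :: "real poly"
  assumes "finite S" "\<forall>s\<in>S. poly p s = 0" "degree p \<le> card S"
  shows "p = smult (coeff p (card S)) (\<Prod>s\<in>S. [:-s, 1:])"
  using assms
proof (induction S arbitrary: p rule: finite_induct)
  case empty
  then obtain a where "p = [:a:]" using degree0_coeffs by (metis le_zero_eq card.empty)
  then show ?case by simp
next
  case (insert s S)
  have "poly p s = 0" using insert.prems by simp
  then obtain q where q: "p = [:-s, 1:] * q" using poly_eq_0_iff_dvd by (metis dvdE)
  have qS: "\<forall>x\<in>S. poly q x = 0"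
  proof
    fix x assume "x \<in> S"
    hence "poly p x = 0" "x \<noteq> s" using insert.prems insert.hyps by auto
    thus "poly q x = 0" using q by simp
  qed
  have dq: "degree q \<le> card S"
  proof (cases "q = 0")
    case False
    have "degree ([:-s, 1:] * q) = degree [:-s, 1:] + degree q"
      using False by (intro degree_mult_eq) auto
    hence "degree p = Suc (degree q)" using q by simp
    thus ?thesis using insert.prems insert.hyps by simp
  qed simp
  have cq: "coeff p (card (insert s S)) = coeff q (card S)"
  proof -
    have "coeff p (Suc (card S)) = coeff q (card S) - s * coeff q (Suc (card S))"
      unfolding q by (simp add: algebra_simps)
    moreover have "coeff q (Suc (card S)) = 0" using dq by (simp add: coeff_eq_0)
    ultimately show ?thesis using insert.hyps by simp
  qed
  have "q = smult (coeff q (card S)) (\<Prod>s\<in>S. [:-s, 1:])" using insert.IH[OF qS dq] .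
  then have "p = smult (coeff q (card S)) ([:-s, 1:] * (\<Prod>s\<in>S. [:-s, 1:]))" using q by (metis mult_smult_right)
  then show ?case unfolding cq prod.insert[OF insert.hyps] .
qed


section \<open>The initial data B and A\<close>

definition Bj :: "nat \<Rightarrow> nat \<Rightarrow> (nat \<Rightarrow> real) \<Rightarrow> real \<Rightarrow> nat \<Rightarrow> real poly" where
  "Bj N g l v k = smult (bzero N g v) (\<Prod>i\<in>{1..g}-{k}. [:-l i, 1:])"

lemma Bpoly_split: "k \<in> {1..g} \<Longrightarrow> Bpoly N g l v = [:-l k, 1:] * Bj N g l v k"
proof -
  assume k: "k \<in> {1..g}"
  have "(\<Prod>i\<in>{1..g}. [:-l i, 1:]) = [:-l k, 1:] * (\<Prod>i\<in>{1..g}-{k}. [:-l i, 1:])"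
    by (rule prod.remove) (use k in auto)
  thus ?thesis unfolding Bpoly_def Bj_def by (simp only: mult_smult_right)
qed

lemma Bdiv: "k \<in> {1..g} \<Longrightarrow> Bpoly N g l v div [:-l k, 1:] = Bj N g l v k"
proof -
  assume k: "k \<in> {1..g}"
  have nz: "[:-l k, 1:] \<noteq> (0::real poly)" by simp
  show ?thesis unfolding Bpoly_split[OF k] by (rule nonzero_mult_div_cancel_left[OF nz])
qed

lemma Aform: "Apoly N g l zz v = smult (azero N g / bzero N g v) (Bpoly N g l v)
   + (\<Sum>k\<in>{1..g}. smult (zz k / (Bder N g l v k * l k)) (Bj N g l v k))"
  unfolding Apoly_def by (simp add: Bdiv)

lemma poly_Bj_at: "k \<in> {1..g} \<Longrightarrow> i \<in> {1..g} \<Longrightarrow>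
   poly (Bj N g l v i) (l k) = (if i = k then Bder N g l v k else 0)"
  unfolding Bj_def Bder_def by (auto simp: poly_prod)

lemma poly_B_at: "k \<in> {1..g} \<Longrightarrow> poly (Bpoly N g l v) (l k) = 0"
  using Bpoly_split[of k g N l v] by simp

lemma Bder_nz:
  assumes inj: "inj_on l {1..g}" and b: "bzero N g v \<noteq> 0" and k: "k \<in> {1..g}"
  shows "Bder N g l v k \<noteq> 0"
proof -
  have "l k - l i \<noteq> 0" if "i \<in> {1..g}-{k}" for i
    using inj_onD[OF inj, of k i] k that by auto
  hence "(\<Prod>i\<in>{1..g}-{k}. l k - l i) \<noteq> 0" by (subst prod_zero_iff) auto
  thus ?thesis unfolding Bder_def using b by simp
qed

lemma A_at_root:
  assumes "inj_on l {1..g}" "\<forall>i\<in>{1..g}. l i \<noteq> 0" "bzero N g v \<noteq> 0" "k \<in> {1..g}"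
  shows "poly (Apoly N g l zz v) (l k) = zz k / l k"
proof -
  have "poly (Apoly N g l zz v) (l k) = (\<Sum>i\<in>{1..g}. zz i / (Bder N g l v i * l i) * (if i = k then Bder N g l v k else 0))"
    unfolding Aform using assms(4) by (simp add: poly_sum poly_B_at poly_Bj_at)
  also have "\<dots> = zz k / (Bder N g l v k * l k) * Bder N g l v k"
    using assms(4) by (simp add: if_distrib sum.delta cong: if_cong)
  also have "\<dots> = zz k / l k" using Bder_nz[OF assms(1,3,4)] by simp
  finally show ?thesis .
qed

lemma coeff_A_top:
  assumes "g \<le> i" "bzero N g v \<noteq> 0" "1 \<le> g"
  shows "coeff (Apoly N g l zz v) i = (if i = g then azero N g else 0)"
proof -
  have mB: "degree (\<Prod>i\<in>{1..g}. [:-l i, 1:]) = g \<and> coeff (\<Prod>i\<in>{1..g}. [:-l i, 1:]) g = 1"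
    using monic_prod[of "{1..g}" l] by simp
  have cB: "coeff (Bpoly N g l v) i = (if i = g then bzero N g v else 0)"
    using mB assms(1) unfolding Bpoly_def by (auto simp: coeff_eq_0)
  have cBj: "coeff (Bj N g l v k) i = 0" if "k \<in> {1..g}" for k
  proof -
    have "degree (\<Prod>i\<in>{1..g}-{k}. [:-l i, 1:]) = g - 1"
      using monic_prod[of "{1..g}-{k}" l] that by simp
    thus ?thesis unfolding Bj_def using assms(1,3) by (simp add: coeff_eq_0)
  qed
  show ?thesis unfolding Aform using assms(2) by (simp add: cB cBj coeff_sum)
qed


lemma dupd: "((\<lambda>t. (lam(j := t)) i) has_real_derivative (if i = j then 1 else 0)) (at x)"
  by (cases "i = j") (auto intro!: derivative_eq_intros)

lemma Bj_upd: "Bj N g (lam(j := t)) v j = Bj N g lam v j"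
  unfolding Bj_def by (intro arg_cong[where f="smult _"] prod.cong) auto

lemma PD_factor: "PD (\<lambda>t. [:-(lam(j := t)) i, 1:]) x (if i = j then [:-1:] else 0)"
  by (cases "i = j") (auto simp: PD_lin PD_const)

lemma PD_Bj_lam: "\<exists>q. PD (\<lambda>t. Bj N g (lam(j := t)) v k) x q"
proof -
  have "\<exists>q. PD (\<lambda>t. \<Prod>i\<in>{1..g}-{k}. [:-(lam(j := t)) i, 1:]) x q"
    apply (rule PD_prod[where p="\<lambda>i. if i = j then [:-1:] else 0"])
     apply simp
    apply (rule PD_factor)
    done
  then obtain q where "PD (\<lambda>t. \<Prod>i\<in>{1..g}-{k}. [:-(lam(j := t)) i, 1:]) x q" by blast
  thus ?thesis unfolding Bj_def using PD_smult_const by blast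
qed

lemma PD_B_lam: "j \<in> {1..g} \<Longrightarrow> PD (\<lambda>t. Bpoly N g (lam(j := t)) v) x (- Bj N g lam v j)"
proof -
  assume j: "j \<in> {1..g}"
  have "Bpoly N g (lam(j := t)) v = [:-t, 1:] * Bj N g lam v j" for t
    using Bpoly_split[OF j, of N "lam(j := t)" v] Bj_upd by simp
  moreover have "PD (\<lambda>t. [:-t, 1:] * Bj N g lam v j) x ([:-1:] * Bj N g lam v j)"
    by (rule PD_mult_const[OF PD_lin])
  ultimately show ?thesis by simp
qed

context
  fixes N g :: nat and al lam z :: "nat \<Rightarrow> real" and v :: real
begin

definition Lc :: "nat \<Rightarrow> bool \<Rightarrow> real \<Rightarrow> nat \<Rightarrow> real" where
  "Lc j b t = (if b then lam(j := t) else lam)"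
definition Zc :: "nat \<Rightarrow> bool \<Rightarrow> real \<Rightarrow> nat \<Rightarrow> real" where
  "Zc j b t = (if b then z else z(j := t))"
definition tz :: "nat \<Rightarrow> bool \<Rightarrow> real" where
  "tz j b = (if b then lam j else z j)"
definition Dp :: "nat \<Rightarrow> nat \<Rightarrow> bool \<Rightarrow> real poly" where
  "Dp m j b = (SOME p. PD (\<lambda>t. FF N g al (Lc j b t) (Zc j b t) v m) (tz j b) p)"
definition Jt :: "nat \<Rightarrow> nat \<Rightarrow> bool \<Rightarrow> real poly" where
  "Jt m = (\<lambda>j b. if j \<in> {1..g} then Dp m j b else 0)"

lemma Dp_eq: "PD (\<lambda>t. FF N g al (Lc j b t) (Zc j b t) v m) (tz j b) p \<Longrightarrow> Dp m j b = p"
  unfolding Dp_def by (rule some_equality) (auto intro: PD_unique)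

lemma Dp_PD: "PD (\<lambda>t. FF N g al (Lc j b t) (Zc j b t) v m) (tz j b) p \<Longrightarrow>
   PD (\<lambda>t. FF N g al (Lc j b t) (Zc j b t) v m) (tz j b) (Dp m j b)"
  using Dp_eq by simp

lemma base_pt: "Lc j b (tz j b) = lam" "Zc j b (tz j b) = z"
  unfolding Lc_def Zc_def tz_def by auto

lemma PD_FF1: "j \<in> {1..g} \<Longrightarrow> PD (\<lambda>t. FF N g al (Lc j b t) (Zc j b t) v (Suc 0)) (tz j b)
   (if b then - Bj N g lam v j else 0)"
  by (cases b) (auto simp: Lc_def Zc_def tz_def PD_B_lam PD_const)

lemma PD_FF2_z: "j \<in> {1..g} \<Longrightarrow> PD (\<lambda>t. FF N g al (Lc j False t) (Zc j False t) v (Suc (Suc 0))) (tz j False)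
   (smult (1 / (Bder N g lam v j * lam j)) (Bj N g lam v j))"
proof -
  assume j: "j \<in> {1..g}"
  define d where "d k = Bder N g lam v k * lam k" for k
  have dw: "((\<lambda>t. (z(j := t)) k / d k) has_real_derivative (if k = j then 1 / d k else 0)) (at (z j))" for k
  proof (cases "k = j")
    case True
    then show ?thesis using DERIV_cdivide[OF DERIV_ident[of "at (z j)"], of "d j"] by simp
  qed auto
  have "PD (\<lambda>t. smult (azero N g / bzero N g v) (Bpoly N g lam v)
      + (\<Sum>k\<in>{1..g}. smult ((z(j := t)) k / d k) (Bj N g lam v k))) (z j)
      (0 + (\<Sum>k\<in>{1..g}. smult (if k = j then 1 / d k else 0) (Bj N g lam v k) + smult ((z(j := z j)) k / d k) 0))"
    by (intro PD_add PD_const PD_sum PD_smult dw) auto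
  moreover have "(\<Sum>k\<in>{1..g}. smult (if k = j then 1 / d k else 0) (Bj N g lam v k) + smult ((z(j := z j)) k / d k) 0)
      = smult (1 / d j) (Bj N g lam v j)"
  proof -
    have "(\<Sum>k\<in>{1..g}. smult (if k = j then 1 / d k else 0) (Bj N g lam v k) + smult ((z(j := z j)) k / d k) 0)
       = (\<Sum>k\<in>{1..g}. if k = j then smult (1 / d j) (Bj N g lam v k) else 0)"
      by (rule sum.cong) auto
    also have "\<dots> = smult (1 / d j) (Bj N g lam v j)" using j by (simp add: sum.delta)
    finally show ?thesis .
  qed
  ultimately show ?thesis unfolding d_def by (simp add: Lc_def Zc_def tz_def Aform)
qed


lemma PD_FF2_lam:
  assumes inj: "inj_on lam {1..g}" and nz: "\<forall>i\<in>{1..g}. lam i \<noteq> 0" and b0: "bzero N g v \<noteq> 0"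
    and g1: "1 \<le> g" and j: "j \<in> {1..g}"
  shows "\<exists>K. PD (\<lambda>t. FF N g al (Lc j True t) (Zc j True t) v (Suc (Suc 0))) (tz j True)
           (smult K (Bj N g lam v j))"
proof -
  define I where "I = {1..g}"
  define A where "A t = Apoly N g (lam(j := t)) z v" for t
  define w where "w k t = z k / (Bder N g (lam(j := t)) v k * (lam(j := t)) k)" for k t
  have Aeq: "A t = smult (azero N g / bzero N g v) (Bpoly N g (lam(j := t)) v)
      + (\<Sum>k\<in>{1..g}. smult (w k t) (Bj N g (lam(j := t)) v k))" for t
    unfolding A_def w_def Aform ..
  have dw: "\<exists>D. (w k has_real_derivative D) (at (lam j))" if k: "k \<in> {1..g}" for k
  proof -
    have "((\<lambda>t. \<Prod>i\<in>{1..g}-{k}. (lam(j := t)) k - (lam(j := t)) i) has_real_derivative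
        (\<Sum>i\<in>{1..g}-{k}. ((if k = j then 1 else 0) - (if i = j then 1 else 0)) *
            (\<Prod>y\<in>{1..g}-{k}-{i}. (lam(j := lam j)) k - (lam(j := lam j)) y))) (at (lam j))"
      by (rule has_field_derivative_prod) (intro DERIV_diff dupd)
    then obtain DB where DB: "((\<lambda>t. Bder N g (lam(j := t)) v k) has_real_derivative DB) (at (lam j))"
      unfolding Bder_def using DERIV_cmult by blast
    have nzd: "Bder N g (lam(j := lam j)) v k * (lam(j := lam j)) k \<noteq> 0"
      using Bder_nz[OF inj b0 k] nz k by simp
    show "\<exists>D. (w k has_real_derivative D) (at (lam j))"
      unfolding w_def using DERIV_divide[OF DERIV_const DERIV_mult[OF DB dupd] nzd] by blast
  qed
  have "\<exists>D. PD A (lam j) D"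
  proof -
    have "\<exists>p. PD (\<lambda>t. \<Sum>k\<in>{1..g}. smult (w k t) (Bj N g (lam(j := t)) v k)) (lam j) p"
    proof (rule PD_sum_ex)
      fix k assume k: "k \<in> {1..g}"
      obtain D where D: "(w k has_real_derivative D) (at (lam j))" using dw[OF k] by blast
      obtain q where q: "PD (\<lambda>t. Bj N g (lam(j := t)) v k) (lam j) q" using PD_Bj_lam by blast
      show "\<exists>p. PD (\<lambda>t. smult (w k t) (Bj N g (lam(j := t)) v k)) (lam j) p"
        using PD_smult[OF D q] by blast
    qed simp
    then obtain p where p: "PD (\<lambda>t. \<Sum>k\<in>{1..g}. smult (w k t) (Bj N g (lam(j := t)) v k)) (lam j) p" by blast
    have "PD A (lam j) (smult (azero N g / bzero N g v) (- Bj N g lam v j) + p)"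
      unfolding Aeq by (intro PD_add PD_smult_const PD_B_lam[OF j] p)
    thus ?thesis by blast
  qed
  then obtain D where D: "PD A (lam j) D" by blast

  have van: "poly D (lam k) = 0" if k: "k \<in> {1..g} - {j}" for k
  proof -
    define S where "S = - (lam ` ({1..g} - {j}) \<union> {0})"
    have oS: "open S" unfolding S_def by (intro open_Compl finite_imp_closed) auto
    have "lam j \<notin> lam ` ({1..g} - {j})"
    proof
      assume "lam j \<in> lam ` ({1..g} - {j})"
      then obtain i where i: "i \<in> {1..g} - {j}" "lam j = lam i" by blast
      thus False using inj_onD[OF inj i(2)] j by auto
    qed
    hence jS: "lam j \<in> S" unfolding S_def using nz j by auto
    have eqS: "poly (A t) (lam k) = z k / lam k" if t: "t \<in> S" for t
    proof -
      have inj': "inj_on (lam(j := t)) {1..g}"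
      proof -
        have "inj_on lam ({1..g} - {j})" using inj_on_subset[OF inj] by blast
        moreover have "inj_on (lam(j := t)) ({1..g} - {j}) = inj_on lam ({1..g} - {j})"
          by (rule inj_on_cong) auto
        ultimately have "inj_on (lam(j := t)) ({1..g} - {j})" by simp
        moreover have "(lam(j := t)) j \<notin> (lam(j := t)) ` ({1..g} - {j} - {j})" using t unfolding S_def by auto
        ultimately have "inj_on (lam(j := t)) (insert j ({1..g} - {j}))"
          using inj_on_insert[of "lam(j := t)" j "{1..g} - {j}"] by blast
        thus ?thesis using insert_Diff[OF j] by simp
      qed
      have nz': "\<forall>i\<in>{1..g}. (lam(j := t)) i \<noteq> 0" using t nz unfolding S_def by auto
      have "poly (A t) ((lam(j := t)) k) = z k / (lam(j := t)) k"
        unfolding A_def using A_at_root[OF inj' nz' b0, of k z] k by blast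
      moreover have "(lam(j := t)) k = lam k" using k by simp
      ultimately show ?thesis by simp
    qed
    have "((\<lambda>t. z k / lam k) has_real_derivative poly D (lam k)) (at (lam j))"
      by (rule has_field_derivative_transform_within_open[OF PD_poly[OF D] oS jS]) (rule eqS)
    thus ?thesis using DERIV_const DERIV_unique by blast
  qed
  have top: "coeff D i = 0" if i: "g \<le> i" for i
  proof -
    have "((\<lambda>t. coeff (A t) i) has_real_derivative coeff D i) (at (lam j))" using D PD_def by blast
    moreover have "(\<lambda>t. coeff (A t) i) = (\<lambda>t. if i = g then azero N g else 0)"
      by (rule ext) (simp add: A_def coeff_A_top[OF i b0 g1])
    ultimately have "((\<lambda>t. if i = g then azero N g else 0) has_real_derivative coeff D i) (at (lam j))" by simp
    thus ?thesis using DERIV_const DERIV_unique by blast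
  qed
  have dD: "degree D \<le> g - 1"
  proof (rule degree_le, intro allI impI)
    fix i assume "g - 1 < i" thus "coeff D i = 0" using top g1 by simp
  qed
  have injS: "inj_on lam ({1..g} - {j})" using inj_on_subset[OF inj] by blast
  have cardS: "card (lam ` ({1..g} - {j})) = g - 1"
    using card_image[OF injS] j by simp
  have vanS: "\<forall>s\<in>lam ` ({1..g} - {j}). poly D s = 0" using van by blast
  have "D = smult (coeff D (g - 1)) (\<Prod>s\<in>lam ` ({1..g} - {j}). [:-s, 1:])"
    using roots_prod[of "lam ` ({1..g} - {j})" D] vanS dD cardS by simp
  also have "(\<Prod>s\<in>lam ` ({1..g} - {j}). [:-s, 1:]) = (\<Prod>i\<in>{1..g} - {j}. [:-lam i, 1:])"
    using prod.reindex[OF injS, of "\<lambda>s. [:-s, 1:]"] by simp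
  finally have DK: "D = smult (coeff D (g - 1) / bzero N g v) (Bj N g lam v j)"
    unfolding Bj_def using b0 by simp
  have FA: "(\<lambda>t. FF N g al (Lc j True t) (Zc j True t) v (Suc (Suc 0))) = A"
    unfolding A_def Lc_def Zc_def by simp
  have "PD (\<lambda>t. FF N g al (Lc j True t) (Zc j True t) v (Suc (Suc 0))) (tz j True)
           (smult (coeff D (g - 1) / bzero N g v) (Bj N g lam v j))"
    unfolding FA tz_def using D DK by simp
  thus ?thesis by blast

qed


lemma base_inv:
  assumes inj: "inj_on lam {1..g}" and nz: "\<forall>i\<in>{1..g}. lam i \<noteq> 0" and b0: "bzero N g v \<noteq> 0"
    and g1: "1 \<le> g"
  shows "Inv g z (FF N g al lam z v (Suc 0)) (Jt (Suc 0)) (FF N g al lam z v (Suc (Suc 0))) (Jt (Suc (Suc 0)))"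
proof -
  define a where "a j = 1 / (Bder N g lam v j * lam j)" for j
  have "\<forall>j\<in>{1..g}. \<exists>K. PD (\<lambda>t. FF N g al (Lc j True t) (Zc j True t) v (Suc (Suc 0))) (tz j True)
           (smult K (Bj N g lam v j))"
    using PD_FF2_lam[OF inj nz b0 g1] by blast
  then obtain K where K: "\<And>j. j \<in> {1..g} \<Longrightarrow> PD (\<lambda>t. FF N g al (Lc j True t) (Zc j True t) v (Suc (Suc 0))) (tz j True)
           (smult (K j) (Bj N g lam v j))"
    by metis
  have J1: "Jt (Suc 0) j b = (if b then - Bj N g lam v j else 0)" if "j \<in> {1..g}" for j b
    unfolding Jt_def using Dp_eq[OF PD_FF1[OF that]] that by simp
  have J2T: "Jt (Suc (Suc 0)) j True = smult (K j) (Bj N g lam v j)" if "j \<in> {1..g}" for j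
    unfolding Jt_def using Dp_eq[OF K[OF that]] that by simp
  have J2F: "Jt (Suc (Suc 0)) j False = smult (a j) (Bj N g lam v j)" if "j \<in> {1..g}" for j
    unfolding Jt_def a_def using Dp_eq[OF PD_FF2_z[OF that]] that by simp
  have I1: "br g z (ev (Jt (Suc 0)) x) (ev (Jt (Suc 0)) y) = 0" for x y
    unfolding br_def ev_def by (rule sum.neutral) (simp add: J1)
  have I2: "br g z (ev (Jt (Suc (Suc 0))) x) (ev (Jt (Suc (Suc 0))) y) = 0" for x y
    unfolding br_def ev_def by (rule sum.neutral) (simp add: J2T J2F)
  have I3: "(x - y) * br g z (ev (Jt (Suc 0)) x) (ev (Jt (Suc (Suc 0))) y) =
      - (poly (FF N g al lam z v (Suc 0)) x * poly (FF N g al lam z v (Suc (Suc 0))) y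
       - poly (FF N g al lam z v (Suc 0)) y * poly (FF N g al lam z v (Suc (Suc 0))) x)" for x y
  proof -
    define B where "B = Bpoly N g lam v"
    define c0 where "c0 = azero N g / bzero N g v"
    define w where "w k = z k / (Bder N g lam v k * lam k)" for k
    have L: "br g z (ev (Jt (Suc 0)) x) (ev (Jt (Suc (Suc 0))) y) =
        (\<Sum>j\<in>{1..g}. - (w j * (poly (Bj N g lam v j) x * poly (Bj N g lam v j) y)))"
      unfolding br_def ev_def by (rule sum.cong) (simp_all add: J1 J2T J2F a_def w_def)
    have PA: "poly (Apoly N g lam z v) t = c0 * poly B t + (\<Sum>k\<in>{1..g}. w k * poly (Bj N g lam v k) t)" for t
      unfolding Aform B_def c0_def w_def by (simp add: poly_sum)
    have "poly B x * poly (Apoly N g lam z v) y - poly B y * poly (Apoly N g lam z v) x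
        = (\<Sum>k\<in>{1..g}. w k * (poly B x * poly (Bj N g lam v k) y - poly B y * poly (Bj N g lam v k) x))"
      unfolding PA by (simp add: algebra_simps sum_distrib_left sum_subtractf[symmetric])
    also have "\<dots> = (\<Sum>k\<in>{1..g}. (x - y) * (w k * (poly (Bj N g lam v k) x * poly (Bj N g lam v k) y)))"
    proof (rule sum.cong)
      fix k assume k: "k \<in> {1..g}"
      have hB: "poly B t = (t - lam k) * poly (Bj N g lam v k) t" for t
        unfolding B_def Bpoly_split[OF k] by (simp add: algebra_simps)
      show "w k * (poly B x * poly (Bj N g lam v k) y - poly B y * poly (Bj N g lam v k) x) =
          (x - y) * (w k * (poly (Bj N g lam v k) x * poly (Bj N g lam v k) y))"
        unfolding hB[of x] hB[of y] by (simp add: algebra_simps)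
    qed simp
    finally show ?thesis unfolding L B_def by (simp add: sum_distrib_left sum_negf)
  qed
  show ?thesis unfolding Inv_def using I1 I2 I3 by blast
qed


lemma rec_step:
  assumes m1: "1 \<le> m" and den: "poly (FF N g al lam z v (Suc m)) (- beta al m) \<noteq> 0"
    and PDm: "\<And>j b. j \<in> {1..g} \<Longrightarrow> PD (\<lambda>t. FF N g al (Lc j b t) (Zc j b t) v m) (tz j b) (Dp m j b)"
    and PDm1: "\<And>j b. j \<in> {1..g} \<Longrightarrow> PD (\<lambda>t. FF N g al (Lc j b t) (Zc j b t) v (Suc m)) (tz j b) (Dp (Suc m) j b)"
  shows "(\<forall>j\<in>{1..g}. \<forall>b. ((\<lambda>t. fcoef N g al (Lc j b t) (Zc j b t) v m) has_real_derivative
            qd (FF N g al lam z v m) (Jt m) (FF N g al lam z v (Suc m)) (Jt (Suc m)) (- beta al m) j b) (at (tz j b)))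
     \<and> (\<forall>j\<in>{1..g}. \<forall>b. PD (\<lambda>t. FF N g al (Lc j b t) (Zc j b t) v (Suc (Suc m))) (tz j b) (Dp (Suc (Suc m)) j b))
     \<and> Jt (Suc (Suc m)) = ndR (FF N g al lam z v m) (Jt m) (FF N g al lam z v (Suc m)) (Jt (Suc m)) (- beta al m)
     \<and> FF N g al lam z v (Suc (Suc m)) = nR (FF N g al lam z v m) (FF N g al lam z v (Suc m)) (- beta al m)"
proof -
  define c where "c = - beta al m"
  define P where "P = FF N g al lam z v m"
  define Q where "Q = FF N g al lam z v (Suc m)"
  have FFr: "FF N g al l zz vv (Suc (Suc m)) =
      (FF N g al l zz vv m - smult (fcoef N g al l zz vv m) (FF N g al l zz vv (Suc m))) div [:- c, 1:]" for l zz vv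
    using m1 unfolding c_def by (cases m) (auto simp: fcoef_def Let_def)
  have fc: "fcoef N g al l zz vv m = poly (FF N g al l zz vv m) c / poly (FF N g al l zz vv (Suc m)) c" for l zz vv
    unfolding fcoef_def c_def by simp
  have Qc: "poly Q c \<noteq> 0" using den unfolding Q_def c_def .
  have dfc: "((\<lambda>t. fcoef N g al (Lc j b t) (Zc j b t) v m) has_real_derivative
            qd P (Jt m) Q (Jt (Suc m)) c j b) (at (tz j b))" if j: "j \<in> {1..g}" for j b
  proof -
    have "((\<lambda>t. poly (FF N g al (Lc j b t) (Zc j b t) v m) c / poly (FF N g al (Lc j b t) (Zc j b t) v (Suc m)) c)
        has_real_derivative (poly (Dp m j b) c * poly Q c - poly P c * poly (Dp (Suc m) j b) c) / (poly Q c * poly Q c))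
        (at (tz j b))"
      using DERIV_divide[OF PD_poly[OF PDm[OF j]] PD_poly[OF PDm1[OF j]]] Qc
      unfolding base_pt P_def Q_def by simp
    thus ?thesis unfolding fc qd_def Jt_def using j by (simp add: power2_eq_square)
  qed
  have PD2: "PD (\<lambda>t. FF N g al (Lc j b t) (Zc j b t) v (Suc (Suc m))) (tz j b)
      ((Dp m j b - (smult (qd P (Jt m) Q (Jt (Suc m)) c j b) Q + smult (qf P Q c) (Dp (Suc m) j b))) div [:- c, 1:])"
    if j: "j \<in> {1..g}" for j b
  proof -
    have "PD (\<lambda>t. (FF N g al (Lc j b t) (Zc j b t) v m - smult (fcoef N g al (Lc j b t) (Zc j b t) v m)
          (FF N g al (Lc j b t) (Zc j b t) v (Suc m))) div [:- c, 1:]) (tz j b)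
      ((Dp m j b - (smult (qd P (Jt m) Q (Jt (Suc m)) c j b) (FF N g al (Lc j b (tz j b)) (Zc j b (tz j b)) v (Suc m))
          + smult (fcoef N g al (Lc j b (tz j b)) (Zc j b (tz j b)) v m) (Dp (Suc m) j b))) div [:- c, 1:])"
      by (intro PD_div_lin PD_diff PD_smult dfc j PDm PDm1)
    thus ?thesis unfolding FFr base_pt P_def Q_def qf_def fc .
  qed
  have J2: "Jt (Suc (Suc m)) = ndR P (Jt m) Q (Jt (Suc m)) c"
  proof (intro ext)
    fix j b
    show "Jt (Suc (Suc m)) j b = ndR P (Jt m) Q (Jt (Suc m)) c j b"
    proof (cases "j \<in> {1..g}")
      case True
      have JD: "Jt k j b = Dp k j b" for k unfolding Jt_def using True by simp
      show ?thesis unfolding ndR_def JD Dp_eq[OF PD2[OF True]] by (simp add: diff_diff_eq)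
    next
      case False
      have JZ: "Jt k j b' = 0" for k b' unfolding Jt_def using False by auto
      show ?thesis by (simp add: JZ ndR_def qd_def)
    qed
  qed
  have F2: "FF N g al lam z v (Suc (Suc m)) = nR P Q c"
    unfolding FFr nR_def qf_def fc P_def Q_def ..
  show ?thesis using dfc PD2 Dp_PD J2 F2 unfolding c_def P_def Q_def by blast
qed


lemma gen_facts:
  assumes "generic N g al lam z v"
  shows "inj_on lam {1..g}" "\<forall>i\<in>{1..g}. lam i \<noteq> 0" "bzero N g v \<noteq> 0"
    "\<And>m. m \<in> {1..N-2} \<Longrightarrow> poly (FF N g al lam z v (Suc m)) (- beta al m) \<noteq> 0"
  using assms unfolding generic_def by auto

lemma main_ind:
  assumes gen: "generic N g al lam z v" and g1: "1 \<le> g"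
  shows "1 \<le> m \<Longrightarrow> Suc m \<le> N \<Longrightarrow>
    (\<forall>j\<in>{1..g}. \<forall>b. PD (\<lambda>t. FF N g al (Lc j b t) (Zc j b t) v m) (tz j b) (Dp m j b) \<and>
                   PD (\<lambda>t. FF N g al (Lc j b t) (Zc j b t) v (Suc m)) (tz j b) (Dp (Suc m) j b)) \<and>
    Inv g z (FF N g al lam z v m) (Jt m) (FF N g al lam z v (Suc m)) (Jt (Suc m))"
proof (induction m)
  case 0
  then show ?case by simp
next
  case (Suc m)
  note gf = gen_facts[OF gen]
  show ?case
  proof (cases "m = 0")
    case True
    have P1: "PD (\<lambda>t. FF N g al (Lc j b t) (Zc j b t) v (Suc 0)) (tz j b) (Dp (Suc 0) j b)"
      if "j \<in> {1..g}" for j b using Dp_PD[OF PD_FF1[OF that]] .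
    have P2: "PD (\<lambda>t. FF N g al (Lc j b t) (Zc j b t) v (Suc (Suc 0))) (tz j b) (Dp (Suc (Suc 0)) j b)"
      if j: "j \<in> {1..g}" for j b
    proof (cases b)
      case True
      obtain K where "PD (\<lambda>t. FF N g al (Lc j True t) (Zc j True t) v (Suc (Suc 0))) (tz j True)
           (smult K (Bj N g lam v j))" using PD_FF2_lam[OF gf(1,2,3) g1 j] by blast
      from Dp_PD[OF this] show ?thesis using True by simp
    next
      case False
      then show ?thesis using Dp_PD[OF PD_FF2_z[OF j]] by simp
    qed
    have I: "Inv g z (FF N g al lam z v (Suc 0)) (Jt (Suc 0)) (FF N g al lam z v (Suc (Suc 0))) (Jt (Suc (Suc 0)))"
      by (rule base_inv[OF gf(1,2,3) g1])
    show ?thesis unfolding True One_nat_def[symmetric]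
    proof (intro conjI ballI allI)
      fix j b assume "j \<in> {1..g}"
      thus "PD (\<lambda>t. FF N g al (Lc j b t) (Zc j b t) v 1) (tz j b) (Dp 1 j b)" using P1 by simp
      show "PD (\<lambda>t. FF N g al (Lc j b t) (Zc j b t) v (Suc 1)) (tz j b) (Dp (Suc 1) j b)" using P2 \<open>j \<in> {1..g}\<close> by simp
    next
      show "Inv g z (FF N g al lam z v 1) (Jt 1) (FF N g al lam z v (Suc 1)) (Jt (Suc 1))" using I by simp
    qed
  next
    case False
    hence m1: "1 \<le> m" by simp
    have IH: "(\<forall>j\<in>{1..g}. \<forall>b. PD (\<lambda>t. FF N g al (Lc j b t) (Zc j b t) v m) (tz j b) (Dp m j b) \<and>
                   PD (\<lambda>t. FF N g al (Lc j b t) (Zc j b t) v (Suc m)) (tz j b) (Dp (Suc m) j b)) \<and>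
      Inv g z (FF N g al lam z v m) (Jt m) (FF N g al lam z v (Suc m)) (Jt (Suc m))"
      using Suc.IH m1 Suc.prems by simp
    have PDm: "\<And>j b. j \<in> {1..g} \<Longrightarrow> PD (\<lambda>t. FF N g al (Lc j b t) (Zc j b t) v m) (tz j b) (Dp m j b)"
      using IH by blast
    have PDm1: "\<And>j b. j \<in> {1..g} \<Longrightarrow> PD (\<lambda>t. FF N g al (Lc j b t) (Zc j b t) v (Suc m)) (tz j b) (Dp (Suc m) j b)"
      using IH by blast
    have inv: "Inv g z (FF N g al lam z v m) (Jt m) (FF N g al lam z v (Suc m)) (Jt (Suc m))"
      using IH by blast
    have den: "poly (FF N g al lam z v (Suc m)) (- beta al m) \<noteq> 0"
      using gf(4)[of m] m1 Suc.prems by simp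
    note R = rec_step[OF m1 den PDm PDm1]
    have PD2: "\<forall>j\<in>{1..g}. \<forall>b. PD (\<lambda>t. FF N g al (Lc j b t) (Zc j b t) v (Suc (Suc m))) (tz j b) (Dp (Suc (Suc m)) j b)"
      using R by blast
    have J2: "Jt (Suc (Suc m)) = ndR (FF N g al lam z v m) (Jt m) (FF N g al lam z v (Suc m)) (Jt (Suc m)) (- beta al m)"
      using R by blast
    have F2: "FF N g al lam z v (Suc (Suc m)) = nR (FF N g al lam z v m) (FF N g al lam z v (Suc m)) (- beta al m)"
      using R by blast
    have I2: "Inv g z (FF N g al lam z v (Suc m)) (Jt (Suc m)) (FF N g al lam z v (Suc (Suc m))) (Jt (Suc (Suc m)))"
      unfolding J2 F2 using step[OF den inv] by blast
    show ?thesis using PDm1 PD2 I2 by blast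
  qed
qed


definition phi :: "nat \<Rightarrow> nat \<Rightarrow> bool \<Rightarrow> real" where
  "phi m = qd (FF N g al lam z v m) (Jt m) (FF N g al lam z v (Suc m)) (Jt (Suc m)) (- beta al m)"

lemma facts_at:
  assumes gen: "generic N g al lam z v" and g1: "1 \<le> g" and k1: "1 \<le> k" and kN: "Suc (Suc k) \<le> N"
  shows "Inv g z (FF N g al lam z v k) (Jt k) (FF N g al lam z v (Suc k)) (Jt (Suc k))"
    "poly (FF N g al lam z v (Suc k)) (- beta al k) \<noteq> 0"
    "Jt (Suc (Suc k)) = ndR (FF N g al lam z v k) (Jt k) (FF N g al lam z v (Suc k)) (Jt (Suc k)) (- beta al k)"
    "FF N g al lam z v (Suc (Suc k)) = nR (FF N g al lam z v k) (FF N g al lam z v (Suc k)) (- beta al k)"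
    "\<And>j b. j \<in> {1..g} \<Longrightarrow> ((\<lambda>t. fcoef N g al (Lc j b t) (Zc j b t) v k) has_real_derivative phi k j b) (at (tz j b))"
proof -
  note MI = main_ind[OF gen g1 k1]
  have A: "(\<forall>j\<in>{1..g}. \<forall>b. PD (\<lambda>t. FF N g al (Lc j b t) (Zc j b t) v k) (tz j b) (Dp k j b) \<and>
                   PD (\<lambda>t. FF N g al (Lc j b t) (Zc j b t) v (Suc k)) (tz j b) (Dp (Suc k) j b)) \<and>
    Inv g z (FF N g al lam z v k) (Jt k) (FF N g al lam z v (Suc k)) (Jt (Suc k))"
    using MI kN by simp
  have PDm: "\<And>j b. j \<in> {1..g} \<Longrightarrow> PD (\<lambda>t. FF N g al (Lc j b t) (Zc j b t) v k) (tz j b) (Dp k j b)"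
    using A by blast
  have PDm1: "\<And>j b. j \<in> {1..g} \<Longrightarrow> PD (\<lambda>t. FF N g al (Lc j b t) (Zc j b t) v (Suc k)) (tz j b) (Dp (Suc k) j b)"
    using A by blast
  show "Inv g z (FF N g al lam z v k) (Jt k) (FF N g al lam z v (Suc k)) (Jt (Suc k))" using A by blast
  show den: "poly (FF N g al lam z v (Suc k)) (- beta al k) \<noteq> 0"
    using gen_facts(4)[OF gen, of k] k1 kN by simp
  note R = rec_step[OF k1 den PDm PDm1]
  show "Jt (Suc (Suc k)) = ndR (FF N g al lam z v k) (Jt k) (FF N g al lam z v (Suc k)) (Jt (Suc k)) (- beta al k)"
    using R by blast
  show "FF N g al lam z v (Suc (Suc k)) = nR (FF N g al lam z v k) (FF N g al lam z v (Suc k)) (- beta al k)"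
    using R by blast
  fix j b assume "j \<in> {1..g}"
  thus "((\<lambda>t. fcoef N g al (Lc j b t) (Zc j b t) v k) has_real_derivative phi k j b) (at (tz j b))"
    using R unfolding phi_def by blast
qed

lemma PD_last:
  assumes gen: "generic N g al lam z v" and g1: "1 \<le> g" and N3: "3 \<le> N" and j: "j \<in> {1..g}"
  shows "PD (\<lambda>t. FF N g al (Lc j b t) (Zc j b t) v (N - 1)) (tz j b) (Dp (N - 1) j b)"
proof -
  have "1 \<le> N - 1" "Suc (N - 1) \<le> N" using N3 by auto
  thus ?thesis using main_ind[OF gen g1, of "N - 1"] j by blast
qed


context
  assumes gen: "generic N g al lam z v" and g1: "1 \<le> g" and N3: "3 \<le> N"
begin

lemma br_consec:
  assumes m1: "1 \<le> m" and mN: "m + 3 \<le> N"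
  shows "br g z (phi m) (phi (Suc m)) = -1"
proof -
  note F = facts_at[OF gen g1 m1]
  note F' = facts_at[OF gen g1, of "Suc m"]
  have den: "poly (FF N g al lam z v (Suc m)) (- beta al m) \<noteq> 0" using F(2) mN by simp
  have inv: "Inv g z (FF N g al lam z v m) (Jt m) (FF N g al lam z v (Suc m)) (Jt (Suc m))" using F(1) mN by simp
  have J2: "Jt (Suc (Suc m)) = ndR (FF N g al lam z v m) (Jt m) (FF N g al lam z v (Suc m)) (Jt (Suc m)) (- beta al m)"
    using F(3) mN by simp
  have F2: "FF N g al lam z v (Suc (Suc m)) = nR (FF N g al lam z v m) (FF N g al lam z v (Suc m)) (- beta al m)"
    using F(4) mN by simp
  have Rc: "poly (nR (FF N g al lam z v m) (FF N g al lam z v (Suc m)) (- beta al m)) (- beta al (Suc m)) \<noteq> 0"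
    using F'(2) mN unfolding F2 by simp
  show ?thesis using consec[OF den Rc inv] unfolding phi_def J2[symmetric] F2[symmetric] by blast
qed

lemma chain:
  assumes m1: "1 \<le> m" and mN: "m + 3 \<le> N" and k: "m + 2 \<le> k"
  shows "Suc k \<le> N \<longrightarrow> (\<forall>y. br g z (phi m) (ev (Jt k) y) = 0 \<and> br g z (phi m) (ev (Jt (Suc k)) y) = 0)"
  using k
proof (induction k rule: nat_induct_at_least)
  case base
  note F = facts_at[OF gen g1 m1]
  have m1': "1 \<le> Suc m" by simp
  note F' = facts_at[OF gen g1 m1']
  have den: "poly (FF N g al lam z v (Suc m)) (- beta al m) \<noteq> 0" using F(2) mN by simp
  have inv: "Inv g z (FF N g al lam z v m) (Jt m) (FF N g al lam z v (Suc m)) (Jt (Suc m))" using F(1) mN by simp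
  have J2: "Jt (Suc (Suc m)) = ndR (FF N g al lam z v m) (Jt m) (FF N g al lam z v (Suc m)) (Jt (Suc m)) (- beta al m)"
    using F(3) mN by simp
  have F2: "FF N g al lam z v (Suc (Suc m)) = nR (FF N g al lam z v m) (FF N g al lam z v (Suc m)) (- beta al m)"
    using F(4) mN by simp
  have J3: "Jt (Suc (Suc (Suc m))) = ndR (FF N g al lam z v (Suc m)) (Jt (Suc m)) (FF N g al lam z v (Suc (Suc m))) (Jt (Suc (Suc m))) (- beta al (Suc m))"
    using F'(3) mN by simp
  have Rc: "poly (nR (FF N g al lam z v m) (FF N g al lam z v (Suc m)) (- beta al m)) (- beta al (Suc m)) \<noteq> 0"
    using F'(2) mN unfolding F2 by simp
  have a: "\<forall>y. br g z (phi m) (ev (Jt (Suc (Suc m))) y) = 0"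
    using step[OF den inv] unfolding phi_def J2 by blast
  have b: "\<forall>y. br g z (phi m) (ev (Jt (Suc (Suc (Suc m)))) y) = 0"
    using consec[OF den Rc inv] unfolding phi_def J3 J2 F2 by blast
  show ?case using a b by simp
next
  case (Suc k)
  show ?case
  proof
    assume kN: "Suc (Suc k) \<le> N"
    have k1: "1 \<le> k" using Suc.hyps m1 by simp
    note F = facts_at[OF gen g1 k1]
    have den: "poly (FF N g al lam z v (Suc k)) (- beta al k) \<noteq> 0" using F(2) kN by simp
    have J2: "Jt (Suc (Suc k)) = ndR (FF N g al lam z v k) (Jt k) (FF N g al lam z v (Suc k)) (Jt (Suc k)) (- beta al k)"
      using F(3) kN by simp
    have IH: "\<forall>y. br g z (phi m) (ev (Jt k) y) = 0 \<and> br g z (phi m) (ev (Jt (Suc k)) y) = 0"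
      using Suc.IH kN by simp
    have "\<forall>y. br g z (phi m) (ev (Jt (Suc (Suc k))) y) = 0"
      unfolding J2 using commute[OF den] IH by blast
    thus "\<forall>y. br g z (phi m) (ev (Jt (Suc k)) y) = 0 \<and> br g z (phi m) (ev (Jt (Suc (Suc k))) y) = 0"
      using IH by blast
  qed
qed

lemma br_far:
  assumes m1: "1 \<le> m" and mn: "m + 2 \<le> n" and nN: "n + 2 \<le> N"
  shows "br g z (phi m) (phi n) = 0"
proof -
  have n1: "1 \<le> n" using mn m1 by simp
  note F = facts_at[OF gen g1 n1]
  have den: "poly (FF N g al lam z v (Suc n)) (- beta al n) \<noteq> 0" using F(2) nN by simp
  have C: "\<forall>y. br g z (phi m) (ev (Jt n) y) = 0 \<and> br g z (phi m) (ev (Jt (Suc n)) y) = 0"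
    using chain[OF m1 _ mn] mn nN by simp
  show ?thesis unfolding phi_def[of n] using commute[OF den] C by blast
qed

lemma br_last_far:
  assumes m1: "1 \<le> m" and mN: "m + 3 \<le> N"
  shows "br g z (phi m) (ev (Jt (N - 1)) 0) = 0"
proof -
  have "Suc (N - 1) \<le> N \<longrightarrow> (\<forall>y. br g z (phi m) (ev (Jt (N - 1)) y) = 0 \<and> br g z (phi m) (ev (Jt (Suc (N - 1))) y) = 0)"
    by (rule chain[OF m1 mN]) (use mN in simp)
  thus ?thesis using N3 by simp
qed

lemma br_last_near: "br g z (phi (N - 2)) (ev (Jt (N - 1)) 0) = - poly (FF N g al lam z v N) 0"
proof -
  have k1: "1 \<le> N - 2" using N3 by simp
  note F = facts_at[OF gen g1 k1]
  have e1: "Suc (N - 2) = N - 1" "Suc (Suc (N - 2)) = N" using N3 by auto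
  have den: "poly (FF N g al lam z v (N - 1)) (- beta al (N - 2)) \<noteq> 0" using F(2) e1 by simp
  have inv: "Inv g z (FF N g al lam z v (N - 2)) (Jt (N - 2)) (FF N g al lam z v (N - 1)) (Jt (N - 1))"
    using F(1) e1 by simp
  have F2: "FF N g al lam z v N = nR (FF N g al lam z v (N - 2)) (FF N g al lam z v (N - 1)) (- beta al (N - 2))"
    using F(4) e1 by simp
  show ?thesis using step[OF den inv] unfolding phi_def e1 F2 by blast
qed


definition psi :: "nat \<Rightarrow> nat \<Rightarrow> bool \<Rightarrow> real" where
  "psi m = (if m \<le> N - 2 then phi m else ev (Jt (N - 1)) 0)"

definition Psi :: "nat \<Rightarrow> nat \<Rightarrow> bool \<Rightarrow> real" where
  "Psi n = (if n = N then (\<lambda>j b. - (\<Sum>i\<in>{1..N-1}. psi i j b)) else psi n)"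

lemma table_lt:
  assumes FN: "poly (FF N g al lam z v N) 0 = 1"
    and m1: "1 \<le> m" and mn: "m < n" and nN: "n \<le> N - 1"
  shows "br g z (psi m) (psi n) = (if n = Suc m then -1 else 0)"
proof (cases "n \<le> N - 2")
  case True
  have pm: "psi m = phi m" "psi n = phi n" unfolding psi_def using True mn by auto
  show ?thesis
  proof (cases "n = Suc m")
    case True
    then show ?thesis unfolding pm using br_consec[OF m1] \<open>n \<le> N - 2\<close> N3 by simp
  next
    case False
    then show ?thesis unfolding pm using br_far[OF m1, of n] mn \<open>n \<le> N - 2\<close> N3 by simp
  qed
next
  case False
  hence n: "n = N - 1" using nN by simp
  have pm: "psi m = phi m" "psi n = ev (Jt (N - 1)) 0" unfolding psi_def using n mn N3 by auto
  show ?thesis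
  proof (cases "m = N - 2")
    case True
    then show ?thesis unfolding pm using br_last_near FN n N3 by simp
  next
    case False
    then show ?thesis unfolding pm using br_last_far[OF m1] n mn N3 by simp
  qed
qed

lemma table:
  assumes FN: "poly (FF N g al lam z v N) 0 = 1"
    and m: "m \<in> {1..N-1}" and n: "n \<in> {1..N-1}"
  shows "br g z (psi m) (psi n) = (if n = Suc m then -1 else if m = Suc n then 1 else 0)"
proof -
  consider "m < n" | "m = n" | "n < m" by linarith
  thus ?thesis
  proof cases
    case 1
    then show ?thesis using table_lt[OF FN _ 1] m n by simp
  next
    case 2
    then show ?thesis using br_self by simp
  next
    case 3
    then show ?thesis using table_lt[OF FN _ 3] m n br_anti[of g z "psi m" "psi n"] by simp
  qed
qed

lemma br_negsum2: "finite S \<Longrightarrow> br g z d (\<lambda>j b. - (\<Sum>i\<in>S. a i j b)) = - (\<Sum>i\<in>S. br g z d (a i))"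
  using br_lin2s[of g z d "-1" "\<lambda>j b. \<Sum>i\<in>S. a i j b"] br_sum2[of S g z d a] by simp

lemma sum_table:
  assumes FN: "poly (FF N g al lam z v N) 0 = 1" and m: "m \<in> {1..N-1}"
  shows "(\<Sum>i\<in>{1..N-1}. br g z (psi m) (psi i)) = (if m \<ge> 2 then 1 else 0) - (if m \<le> N - 2 then 1 else 0)"
proof -
  have "(\<Sum>i\<in>{1..N-1}. br g z (psi m) (psi i)) =
      (\<Sum>i\<in>{1..N-1}. (if i = Suc m then -1 else 0) + (if i = m - 1 \<and> m \<ge> 2 then 1 else 0))"
    by (rule sum.cong) (use table[OF FN m] m in auto)
  also have "\<dots> = (\<Sum>i\<in>{1..N-1}. (if i = Suc m then -1 else 0)) + (\<Sum>i\<in>{1..N-1}. (if i = m - 1 \<and> m \<ge> 2 then 1 else 0))"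
    by (rule sum.distrib)
  also have "(\<Sum>i\<in>{1..N-1}. (if i = Suc m then -1 else 0)) = (if m \<le> N - 2 then -1 else (0::real))"
    using m by (simp add: sum.delta) arith
  also have "(\<Sum>i\<in>{1..N-1}. (if i = m - 1 \<and> m \<ge> 2 then 1 else 0)) = (if m \<ge> 2 then 1 else (0::real))"
  proof (cases "m \<ge> 2")
    case True
    then show ?thesis using m by (simp add: sum.delta) arith
  qed simp
  finally show ?thesis by simp
qed

lemma Psi_table:
  assumes FN: "poly (FF N g al lam z v N) 0 = 1" and m: "m \<in> {1..N}" and n: "n \<in> {1..N}"
  shows "br g z (Psi m) (Psi n) = tgtPB N m n"
proof -
  have fin: "finite {1..N-1}" by simp
  have mN: "br g z (psi m) (Psi N) = tgtPB N m N" if m: "m \<in> {1..N-1}" for m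
  proof -
    have "br g z (psi m) (Psi N) = - (\<Sum>i\<in>{1..N-1}. br g z (psi m) (psi i))"
      unfolding Psi_def using br_negsum2[OF fin] by simp
    also have "\<dots> = (if m \<le> N - 2 then 1 else 0) - (if m \<ge> 2 then 1 else 0)"
      using sum_table[OF FN m] by simp
    also have "\<dots> = tgtPB N m N"
      unfolding tgtPB_def cnext_def using m N3 by auto
    finally show ?thesis .
  qed
  consider "m \<noteq> N" "n \<noteq> N" | "m \<noteq> N" "n = N" | "m = N" "n \<noteq> N" | "m = N" "n = N" by blast
  thus ?thesis
  proof cases
    case 1
    hence "m \<in> {1..N-1}" "n \<in> {1..N-1}" using m n by auto
    then show ?thesis unfolding Psi_def tgtPB_def cnext_def using 1 table[OF FN] by auto
  next
    case 2
    hence "m \<in> {1..N-1}" using m by auto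
    then show ?thesis using mN 2 unfolding Psi_def by simp
  next
    case 3
    hence n': "n \<in> {1..N-1}" using n by auto
    have "br g z (Psi N) (Psi n) = - br g z (psi n) (Psi N)"
      using br_anti[of g z "Psi N" "Psi n"] 3 unfolding Psi_def by simp
    also have "\<dots> = - tgtPB N n N" using mN[OF n'] by simp
    also have "\<dots> = tgtPB N N n" unfolding tgtPB_def cnext_def using n' N3 by auto
    finally show ?thesis using 3 by simp
  next
    case 4
    then show ?thesis using br_self unfolding tgtPB_def cnext_def using N3 by simp
  qed
qed


lemma Phi_deriv:
  assumes n: "n \<in> {1..N}" and j: "j \<in> {1..g}"
  shows "((\<lambda>t. Phi N g al (Lc j b t) (Zc j b t) v n) has_real_derivative Psi n j b) (at (tz j b))"
proof -
  have dl: "((\<lambda>t. coeff (FF N g al (Lc j b t) (Zc j b t) v (N - 1)) 0) has_real_derivative ev (Jt (N - 1)) 0 j b) (at (tz j b))"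
  proof -
    have "((\<lambda>t. poly (FF N g al (Lc j b t) (Zc j b t) v (N - 1)) 0) has_real_derivative poly (Dp (N - 1) j b) 0) (at (tz j b))"
      by (rule PD_poly[OF PD_last[OF gen g1 N3 j]])
    thus ?thesis unfolding ev_def Jt_def using j by (simp add: poly_0_coeff_0)
  qed
  have df: "((\<lambda>t. fcoef N g al (Lc j b t) (Zc j b t) v i) has_real_derivative phi i j b) (at (tz j b))"
    if i: "i \<in> {1..N-2}" for i
  proof -
    have "1 \<le> i" "Suc (Suc i) \<le> N" using i by auto
    thus ?thesis using facts_at(5)[OF gen g1, of i j b] j by blast
  qed
  have nN: "n \<le> N" using n by simp
  consider "n \<le> N - 2" | "n = N - 1" | "n = N" using nN by linarith
  thus ?thesis
  proof cases
    case 1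
    have "(\<lambda>t. Phi N g al (Lc j b t) (Zc j b t) v n) = (\<lambda>t. fcoef N g al (Lc j b t) (Zc j b t) v n)"
      unfolding Phi_def using 1 by simp
    moreover have "n \<noteq> N" using 1 N3 by simp
    hence "Psi n = phi n" unfolding Psi_def psi_def using 1 by simp
    ultimately show ?thesis using df[of n] 1 n by simp
  next
    case 2
    have "(\<lambda>t. Phi N g al (Lc j b t) (Zc j b t) v n) = (\<lambda>t. coeff (FF N g al (Lc j b t) (Zc j b t) v (N - 1)) 0)"
    proof -
      have "\<not> n \<le> N - 2" "n \<noteq> N" using 2 N3 by auto
      thus ?thesis unfolding Phi_def using 2 by simp
    qed
    moreover have "\<not> n \<le> N - 2" "n \<noteq> N" using 2 N3 by auto
    hence "Psi n = ev (Jt (N - 1)) 0" unfolding Psi_def psi_def using 2 by simp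
    ultimately show ?thesis using dl by simp
  next
    case 3
    have "(\<lambda>t. Phi N g al (Lc j b t) (Zc j b t) v n) = (\<lambda>t. 2 * v - ((\<Sum>i=1..N-2. fcoef N g al (Lc j b t) (Zc j b t) v i)
        + coeff (FF N g al (Lc j b t) (Zc j b t) v (N - 1)) 0))"
    proof -
      have "\<not> n \<le> N - 2" "n \<noteq> N - 1" using 3 N3 by auto
      thus ?thesis unfolding Phi_def by simp
    qed
    moreover have "((\<lambda>t. 2 * v - ((\<Sum>i=1..N-2. fcoef N g al (Lc j b t) (Zc j b t) v i)
        + coeff (FF N g al (Lc j b t) (Zc j b t) v (N - 1)) 0)) has_real_derivative
        0 - ((\<Sum>i=1..N-2. phi i j b) + ev (Jt (N - 1)) 0 j b)) (at (tz j b))"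
      by (intro DERIV_diff DERIV_const DERIV_add DERIV_sum df dl) simp
    moreover have "Psi n j b = 0 - ((\<Sum>i=1..N-2. phi i j b) + ev (Jt (N - 1)) 0 j b)"
    proof -
      have e: "{1..N-1} = insert (N - 1) {1..N-2}" using N3 by auto
      have "(\<Sum>i\<in>{1..N-1}. psi i j b) = psi (N - 1) j b + (\<Sum>i\<in>{1..N-2}. psi i j b)"
        unfolding e by (subst sum.insert) auto
      also have "(\<Sum>i\<in>{1..N-2}. psi i j b) = (\<Sum>i\<in>{1..N-2}. phi i j b)"
        by (rule sum.cong) (auto simp: psi_def)
      also have "psi (N - 1) j b = ev (Jt (N - 1)) 0 j b"
      proof -
        have "\<not> N - 1 \<le> N - 2" using N3 by auto
        thus ?thesis unfolding psi_def by simp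
      qed
      finally show ?thesis unfolding Psi_def using 3 by simp
    qed
    ultimately show ?thesis by simp
  qed
qed

lemma srcPB_Psi:
  assumes m: "m \<in> {1..N}" and n: "n \<in> {1..N}"
  shows "srcPB g (\<lambda>l zz vv. Phi N g al l zz vv m) (\<lambda>l zz vv. Phi N g al l zz vv n) lam z v = br g z (Psi m) (Psi n)"
proof -
  have dl: "dlam (\<lambda>l zz vv. Phi N g al l zz vv k) j lam z v = Psi k j True" if k: "k \<in> {1..N}" and j: "j \<in> {1..g}" for k j
    using DERIV_imp_deriv[OF Phi_deriv[OF k j, of True]] unfolding dlam_def Lc_def Zc_def tz_def by simp
  have dzz: "dz (\<lambda>l zz vv. Phi N g al l zz vv k) j lam z v = Psi k j False" if k: "k \<in> {1..N}" and j: "j \<in> {1..g}" for k j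
    using DERIV_imp_deriv[OF Phi_deriv[OF k j, of False]] unfolding dz_def Lc_def Zc_def tz_def by simp
  show ?thesis unfolding srcPB_def br_def
    by (rule sum.cong) (simp_all add: dl[OF m] dl[OF n] dzz[OF m] dzz[OF n])
qed


lemma rec_val:
  assumes "1 \<le> k" "Suc (Suc k) \<le> N"
  shows "FF N g al lam z v (Suc (Suc k)) =
    (FF N g al lam z v k - smult (fcoef N g al lam z v k) (FF N g al lam z v (Suc k))) div [:-(- beta al k), 1:]"
  using facts_at(4)[OF gen g1 assms] unfolding nR_def qf_def fcoef_def .

lemma odd_deg:
  assumes Nodd: "N = 2 * g + 1"
  shows "2 * i + 2 \<le> N \<Longrightarrow> degree (FF N g al lam z v (2 * i + 1)) \<le> g - i \<and>
     coeff (FF N g al lam z v (2 * i + 1)) (g - i) = 1 \<and> degree (FF N g al lam z v (2 * i + 2)) \<le> g - i - 1"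
proof (induction i)
  case 0
  have b0: "bzero N g v = 1" "azero N g = 0" unfolding bzero_def azero_def using Nodd by auto
  have mB: "degree (\<Prod>i\<in>{1..g}. [:-lam i, 1:]) = g \<and> coeff (\<Prod>i\<in>{1..g}. [:-lam i, 1:]) g = 1"
    using monic_prod[of "{1..g}" lam] by simp
  have dA: "degree (Apoly N g lam z v) \<le> g - 1"
  proof (rule degree_le, intro allI impI)
    fix i assume "g - 1 < i"
    hence "g \<le> i" using g1 by simp
    thus "coeff (Apoly N g lam z v) i = 0" using coeff_A_top[of g i N v lam z] b0 g1 by simp
  qed
  have dB: "degree (Bpoly N g lam v) \<le> g" "coeff (Bpoly N g lam v) g = 1"
    unfolding Bpoly_def using mB b0 by (auto intro: order.trans[OF degree_smult_le])
  show ?case using dB dA by (simp add: numeral_2_eq_2)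
next
  case (Suc i)
  have i2: "2 * i + 2 \<le> N" using Suc.prems by simp
  note IH = Suc.IH[OF i2]
  have gi: "1 \<le> g - i" using Suc.prems Nodd by simp
  define F where "F k = FF N g al lam z v k" for k
  define f where "f k = fcoef N g al lam z v k" for k
  have r1: "F (2 * i + 3) = (F (2 * i + 1) - smult (f (2 * i + 1)) (F (2 * i + 2))) div [:-(- beta al (2 * i + 1)), 1:]"
    using rec_val[of "2 * i + 1"] Suc.prems unfolding F_def f_def by (simp add: numeral_3_eq_3 numeral_2_eq_2)
  have r2: "F (2 * i + 4) = (F (2 * i + 2) - smult (f (2 * i + 2)) (F (2 * i + 3))) div [:-(- beta al (2 * i + 2)), 1:]"
    using rec_val[of "2 * i + 2"] Suc.prems unfolding F_def f_def by (simp add: numeral_3_eq_3 numeral_2_eq_2 eval_nat_numeral)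
  have S1d: "degree (F (2 * i + 1) - smult (f (2 * i + 1)) (F (2 * i + 2))) \<le> Suc (g - i - 1)"
    using IH gi unfolding F_def by (intro degree_diff_le) (auto intro: order.trans[OF degree_smult_le])
  have S1c: "coeff (F (2 * i + 1) - smult (f (2 * i + 1)) (F (2 * i + 2))) (Suc (g - i - 1)) = 1"
  proof -
    have "degree (F (2 * i + 2)) < g - i" using IH gi unfolding F_def by linarith
    hence "coeff (F (2 * i + 2)) (g - i) = 0" by (rule coeff_eq_0)
    moreover have e: "Suc (g - i - 1) = g - i" using gi by simp
    ultimately show ?thesis using IH unfolding F_def e by simp
  qed
  have F3: "degree (F (2 * i + 3)) \<le> g - i - 1 \<and> coeff (F (2 * i + 3)) (g - i - 1) = 1"
    using div_lin_deg[OF S1d, of "- beta al (2 * i + 1)"] S1c unfolding r1 by simp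
  have S2d: "degree (F (2 * i + 2) - smult (f (2 * i + 2)) (F (2 * i + 3))) \<le> Suc (g - i - 1 - 1)"
    using IH F3 unfolding F_def by (intro degree_diff_le) (auto intro: order.trans[OF degree_smult_le])
  have F4: "degree (F (2 * i + 4)) \<le> g - i - 1 - 1"
    using div_lin_deg[OF S2d, of "- beta al (2 * i + 2)"] unfolding r2 by simp
  show ?case using F3 F4 unfolding F_def by (simp add: eval_nat_numeral)
qed


lemma even_deg:
  assumes Nev: "N = 2 * g + 2"
  shows "2 * i + 2 \<le> N \<Longrightarrow> degree (FF N g al lam z v (2 * i + 1)) \<le> g - i \<and>
     coeff (FF N g al lam z v (2 * i + 1)) (g - i) = v - (\<Sum>l\<in>{l\<in>{1..2 * i}. odd l}. fcoef N g al lam z v l) \<and>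
     degree (FF N g al lam z v (2 * i + 2)) \<le> g - i \<and> coeff (FF N g al lam z v (2 * i + 2)) (g - i) = 1"
proof (induction i)
  case 0
  have b0: "bzero N g v = v" "azero N g = 1" unfolding bzero_def azero_def using Nev by auto
  have bnz: "bzero N g v \<noteq> 0" using gen_facts(3)[OF gen] .
  have mB: "degree (\<Prod>i\<in>{1..g}. [:-lam i, 1:]) = g \<and> coeff (\<Prod>i\<in>{1..g}. [:-lam i, 1:]) g = 1"
    using monic_prod[of "{1..g}" lam] by simp
  have dA: "degree (Apoly N g lam z v) \<le> g"
  proof (rule degree_le, intro allI impI)
    fix i assume "g < i"
    thus "coeff (Apoly N g lam z v) i = 0" using coeff_A_top[of g i N v lam z] bnz g1 by simp
  qed
  have cA: "coeff (Apoly N g lam z v) g = 1" using coeff_A_top[of g g N v lam z] bnz g1 b0 by simp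
  have dB: "degree (Bpoly N g lam v) \<le> g" "coeff (Bpoly N g lam v) g = v"
    unfolding Bpoly_def using mB b0 by (auto intro: order.trans[OF degree_smult_le])
  show ?case using dB dA cA by (simp add: numeral_2_eq_2)
next
  case (Suc i)
  have i2: "2 * i + 2 \<le> N" using Suc.prems by simp
  note IH = Suc.IH[OF i2]
  have gi: "1 \<le> g - i" using Suc.prems Nev by simp
  have e: "Suc (g - i - 1) = g - i" using gi by simp
  define F where "F k = FF N g al lam z v k" for k
  define f where "f k = fcoef N g al lam z v k" for k
  define Sg where "Sg i = (\<Sum>l\<in>{l\<in>{1..2 * i}. odd l}. f l)" for i
  have IH': "degree (F (2 * i + 1)) \<le> g - i" "coeff (F (2 * i + 1)) (g - i) = v - Sg i"
     "degree (F (2 * i + 2)) \<le> g - i" "coeff (F (2 * i + 2)) (g - i) = 1"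
    using IH unfolding F_def f_def Sg_def by auto
  have r1: "F (2 * i + 3) = (F (2 * i + 1) - smult (f (2 * i + 1)) (F (2 * i + 2))) div [:-(- beta al (2 * i + 1)), 1:]"
    using rec_val[of "2 * i + 1"] Suc.prems unfolding F_def f_def by (simp add: numeral_3_eq_3 numeral_2_eq_2)
  have r2: "F (2 * i + 4) = (F (2 * i + 2) - smult (f (2 * i + 2)) (F (2 * i + 3))) div [:-(- beta al (2 * i + 2)), 1:]"
    using rec_val[of "2 * i + 2"] Suc.prems unfolding F_def f_def by (simp add: numeral_3_eq_3 numeral_2_eq_2 eval_nat_numeral)
  have S1d: "degree (F (2 * i + 1) - smult (f (2 * i + 1)) (F (2 * i + 2))) \<le> Suc (g - i - 1)"
    unfolding e using IH' by (intro degree_diff_le) (auto intro: order.trans[OF degree_smult_le])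
  have S1c: "coeff (F (2 * i + 1) - smult (f (2 * i + 1)) (F (2 * i + 2))) (Suc (g - i - 1)) = v - Sg i - f (2 * i + 1)"
    unfolding e using IH' by simp
  have F3: "degree (F (2 * i + 3)) \<le> g - i - 1 \<and> coeff (F (2 * i + 3)) (g - i - 1) = v - Sg i - f (2 * i + 1)"
    using div_lin_deg[OF S1d, of "- beta al (2 * i + 1)"] S1c unfolding r1 by simp
  have S2d: "degree (F (2 * i + 2) - smult (f (2 * i + 2)) (F (2 * i + 3))) \<le> Suc (g - i - 1)"
    unfolding e using IH' F3 gi by (intro degree_diff_le) (auto intro: order.trans[OF degree_smult_le])
  have S2c: "coeff (F (2 * i + 2) - smult (f (2 * i + 2)) (F (2 * i + 3))) (Suc (g - i - 1)) = 1"
  proof -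
    have "degree (F (2 * i + 3)) < g - i" using F3 gi by linarith
    hence "coeff (F (2 * i + 3)) (g - i) = 0" by (rule coeff_eq_0)
    thus ?thesis unfolding e using IH' by simp
  qed
  have F4: "degree (F (2 * i + 4)) \<le> g - i - 1 \<and> coeff (F (2 * i + 4)) (g - i - 1) = 1"
    using div_lin_deg[OF S2d, of "- beta al (2 * i + 2)"] S2c unfolding r2 by simp
  have Sg: "Sg (Suc i) = Sg i + f (2 * i + 1)"
  proof -
    have "{l\<in>{1..2 * Suc i}. odd l} = insert (2 * i + 1) {l\<in>{1..2 * i}. odd l}"
      by (auto; presburger)
    thus ?thesis unfolding Sg_def by simp
  qed
  show ?case using F3 F4 Sg unfolding F_def f_def Sg_def by (simp add: eval_nat_numeral algebra_simps)
qed

lemma FN_one: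
  assumes Ng: "N = 2 * g + 1 \<or> N = 2 * g + 2"
  shows "poly (FF N g al lam z v N) 0 = 1"
proof (cases "N = 2 * g + 1")
  case True
  have "2 * (g - 1) + 2 \<le> N" using True g1 by simp
  note D = odd_deg[OF True this]
  have e1: "2 * (g - 1) + 1 = 2 * g - 1" "2 * (g - 1) + 2 = 2 * g" "g - (g - 1) = 1" "Suc (2 * g - 1) = 2 * g"
    using g1 by auto
  have D': "degree (FF N g al lam z v (2 * g - 1)) \<le> 1" "coeff (FF N g al lam z v (2 * g - 1)) 1 = 1"
    "degree (FF N g al lam z v (Suc (2 * g - 1))) \<le> 0"
    using D unfolding e1 by auto
  have k1: "1 \<le> 2 * g - 1" "Suc (Suc (2 * g - 1)) \<le> N" using g1 True by auto
  have NN: "N = Suc (Suc (2 * g - 1))" using True g1 by simp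
  define S where "S = FF N g al lam z v (2 * g - 1) - smult (fcoef N g al lam z v (2 * g - 1)) (FF N g al lam z v (Suc (2 * g - 1)))"
  have Sd: "degree S \<le> Suc 0" unfolding S_def using D'
    by (intro degree_diff_le) (auto intro: order.trans[OF degree_smult_le])
  have Sc: "coeff S (Suc 0) = 1" unfolding S_def using D' by (simp add: coeff_eq_0)
  have "FF N g al lam z v N = S div [:-(- beta al (2 * g - 1)), 1:]"
    unfolding S_def by (subst NN, subst rec_val[OF k1]) (simp add: NN[symmetric])
  thus ?thesis using div_lin_deg[OF Sd, of "- beta al (2 * g - 1)"] Sc by (simp add: poly_0_coeff_0)
next
  case False
  hence Nev: "N = 2 * g + 2" using Ng by simp
  have "2 * g + 2 \<le> N" using Nev by simp
  note D = even_deg[OF Nev this]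
  have "poly (FF N g al lam z v N) 0 = coeff (FF N g al lam z v (2 * g + 2)) (g - g)"
    using Nev by (simp add: poly_0_coeff_0)
  thus ?thesis using D by simp
qed


lemma even_sum:
  assumes Nev: "N = 2 * g + 2"
  shows "(\<Sum>i\<in>{i\<in>{1..N}. odd i}. Phi N g al lam z v i) = (\<Sum>i\<in>{i\<in>{1..N}. even i}. Phi N g al lam z v i)"
proof -
  define P where "P i = Phi N g al lam z v i" for i
  define f where "f i = fcoef N g al lam z v i" for i
  define c where "c = coeff (FF N g al lam z v (N - 1)) 0"
  have Pf: "P i = f i" if "i \<le> N - 2" for i unfolding P_def f_def Phi_def using that by simp
  have nn: "\<not> N - 1 \<le> N - 2" "\<not> N \<le> N - 2" "N \<noteq> N - 1" using N3 by auto
  have Pc: "P (N - 1) = c" unfolding P_def c_def Phi_def using nn by simp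
  have PN: "P N = 2 * v - ((\<Sum>i=1..N-2. f i) + c)" unfolding P_def c_def f_def Phi_def using nn by simp
  have "2 * g + 2 \<le> N" using Nev by simp
  note D = even_deg[OF Nev this]
  have cv: "c = v - (\<Sum>l\<in>{l\<in>{1..N-2}. odd l}. f l)"
  proof -
    have "N - 1 = 2 * g + 1" "N - 2 = 2 * g" using Nev by auto
    thus ?thesis using D unfolding c_def f_def by simp
  qed
  have odd_set: "{i\<in>{1..N}. odd i} = insert (N - 1) {i\<in>{1..N-2}. odd i}"
    using Nev by (auto; presburger)
  have oddsum: "(\<Sum>i\<in>{i\<in>{1..N}. odd i}. P i) = v"
  proof -
    have "(\<Sum>i\<in>{i\<in>{1..N}. odd i}. P i) = P (N - 1) + (\<Sum>i\<in>{i\<in>{1..N-2}. odd i}. P i)"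
      unfolding odd_set by (subst sum.insert) auto
    also have "(\<Sum>i\<in>{i\<in>{1..N-2}. odd i}. P i) = (\<Sum>i\<in>{i\<in>{1..N-2}. odd i}. f i)"
      by (rule sum.cong) (auto simp: Pf)
    finally show ?thesis using Pc cv by simp
  qed
  have tot_set: "{1..N} = insert N (insert (N - 1) {1..N-2})" using N3 by auto
  have total: "(\<Sum>i\<in>{1..N}. P i) = 2 * v"
  proof -
    have "(\<Sum>i\<in>{1..N}. P i) = P N + (P (N - 1) + (\<Sum>i\<in>{1..N-2}. P i))"
    proof -
      have a: "N \<notin> insert (N - 1) {1..N-2}" "N - 1 \<notin> {1..N-2}" using N3 by auto
      show ?thesis unfolding tot_set sum.insert[OF finite_insert[THEN iffD2, OF finite_atLeastAtMost] a(1)]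
        sum.insert[OF finite_atLeastAtMost a(2)] ..
    qed
    also have "(\<Sum>i\<in>{1..N-2}. P i) = (\<Sum>i\<in>{1..N-2}. f i)"
      by (rule sum.cong) (auto simp: Pf)
    finally show ?thesis using PN Pc by simp
  qed
  have split: "(\<Sum>i\<in>{1..N}. P i) = (\<Sum>i\<in>{i\<in>{1..N}. odd i}. P i) + (\<Sum>i\<in>{i\<in>{1..N}. even i}. P i)"
  proof -
    have "(\<Sum>i\<in>{1..N}. P i) = (\<Sum>i\<in>{1..N}. (if odd i then P i else 0) + (if even i then P i else 0))"
      by (rule sum.cong) auto
    also have "\<dots> = (\<Sum>i\<in>{1..N}. (if odd i then P i else 0)) + (\<Sum>i\<in>{1..N}. (if even i then P i else 0))"
      by (rule sum.distrib)
    also have "(\<Sum>i\<in>{1..N}. (if odd i then P i else 0)) = (\<Sum>i\<in>{i\<in>{1..N}. odd i}. P i)"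
      by (rule sum.inter_filter[symmetric]) simp
    also have "(\<Sum>i\<in>{1..N}. (if even i then P i else 0)) = (\<Sum>i\<in>{i\<in>{1..N}. even i}. P i)"
      by (rule sum.inter_filter[symmetric]) simp
    finally show ?thesis .
  qed
  show ?thesis using split total oddsum unfolding P_def by simp
qed

lemma main_result:
  assumes Ng: "N = 2 * g + 1 \<or> N = 2 * g + 2"
  shows "(\<forall>n\<in>{1..N}. \<forall>j\<in>{1..g}.
            (\<lambda>t. Phi N g al (lam(j := t)) z v n) differentiable (at (lam j)) \<and>
            (\<lambda>t. Phi N g al lam (z(j := t)) v n) differentiable (at (z j)))
       \<and> (\<forall>m\<in>{1..N}. \<forall>n\<in>{1..N}.
            srcPB g (\<lambda>l zz vv. Phi N g al l zz vv m) (\<lambda>l zz vv. Phi N g al l zz vv n) lam z v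
              = tgtPB N m n)
       \<and> (even N \<longrightarrow>
            (\<Sum>i\<in>{i\<in>{1..N}. odd i}. Phi N g al lam z v i) = (\<Sum>i\<in>{i\<in>{1..N}. even i}. Phi N g al lam z v i))"
proof (intro conjI ballI impI)
  fix n j assume n: "n \<in> {1..N}" and j: "j \<in> {1..g}"
  have d1: "((\<lambda>t. Phi N g al (lam(j := t)) z v n) has_real_derivative Psi n j True) (at (lam j))"
    using Phi_deriv[OF n j, of True] unfolding Lc_def Zc_def tz_def by simp
  have d2: "((\<lambda>t. Phi N g al lam (z(j := t)) v n) has_real_derivative Psi n j False) (at (z j))"
    using Phi_deriv[OF n j, of False] unfolding Lc_def Zc_def tz_def by simp
  show "(\<lambda>t. Phi N g al (lam(j := t)) z v n) differentiable (at (lam j))"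
    using differentiableI[OF has_field_derivative_imp_has_derivative[OF d1]] .
  show "(\<lambda>t. Phi N g al lam (z(j := t)) v n) differentiable (at (z j))"
    using differentiableI[OF has_field_derivative_imp_has_derivative[OF d2]] .
next
  fix m n assume m: "m \<in> {1..N}" and n: "n \<in> {1..N}"
  show "srcPB g (\<lambda>l zz vv. Phi N g al l zz vv m) (\<lambda>l zz vv. Phi N g al l zz vv n) lam z v = tgtPB N m n"
    using srcPB_Psi[OF m n] Psi_table[OF FN_one[OF Ng] m n] by simp
next
  assume "even N"
  hence "N = 2 * g + 2" using Ng by auto
  thus "(\<Sum>i\<in>{i\<in>{1..N}. odd i}. Phi N g al lam z v i) = (\<Sum>i\<in>{i\<in>{1..N}. even i}. Phi N g al lam z v i)"
    by (rule even_sum)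
qed

end

end

theorem mainTheorem9:
  fixes N g :: nat and al lam z :: "nat \<Rightarrow> real" and v :: real
  assumes "N \<ge> 3" and "g \<ge> 1" and "N = 2*g+1 \<or> N = 2*g+2"
    and "generic N g al lam z v"
  shows "(\<forall>n\<in>{1..N}. \<forall>j\<in>{1..g}.
            (\<lambda>t. Phi N g al (lam(j := t)) z v n) differentiable (at (lam j)) \<and>
            (\<lambda>t. Phi N g al lam (z(j := t)) v n) differentiable (at (z j)))
       \<and> (\<forall>m\<in>{1..N}. \<forall>n\<in>{1..N}.
            srcPB g (\<lambda>l zz vv. Phi N g al l zz vv m) (\<lambda>l zz vv. Phi N g al l zz vv n) lam z v
              = tgtPB N m n)
       \<and> (even N \<longrightarrow>
            (\<Sum>i\<in>{i\<in>{1..N}. odd i}. Phi N g al lam z v i) = (\<Sum>i\<in>{i\<in>{1..N}. even i}. Phi N g al lam z v i))"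
  using main_result[OF assms(4) assms(2) assms(1) assms(3)] .

end
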